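(* Let $d\ge1$ and consider the linear operator $L\rho=-\partial_Q(V'\rho)+\tfrac12\partial_Q^2\rho$ with $V(Q)=Q^4/4-\mu Q^2/2+\nu Q$ ($\mu,\nu\in\mathbb{R}$), acting from $\mathbb{H}^2_1(\mathbb{R};\mathbb{R})$ to $\mathbb{L}^2_1(\mathbb{R};\mathbb{R})$, with eigenvalues $0=\lambda_1>\lambda_2>\lambda_3>\dots$ and eigenfunctions $\phi_1,\phi_2,\dots$ orthonormal with respect to $\langle\cdot,\cdot\rangle_1$, and let $M(t)=e^{tL}$, $t\ge0$. Let $\rho_1,\dots,\rho_d\in\mathbb{L}^2_1(\mathbb{R};\mathbb{R})$ with $\int_\mathbb{R}\rho_j\,dQ=1$, and assume the $d\times d$ matrices $T_{\mathrm{lin}}=(\langle\phi_\ell,\rho_j\rangle_1)_{\ell,j=1}^d$ and $R_d=(\int_\mathbb{R}Q^{k-1}\phi_\ell(Q)\,dQ)_{k,\ell=1}^d$ are invertible. Define for $t\ge0$ the $d\times d$ matrices $$P_{\mathrm{lin},*}(t)=R_d\,\operatorname{diag}(e^{\lambda_1t},\dots,e^{\lambda_dt})\,T_{\mathrm{lin}},\qquad [P_{\mathrm{lin}}(t)]_{k,j}=\int_\mathbb{R}Q^{k-1}[M(t)\rho_j](Q)\,dQ,$$ and $\Phi_{\mathrm{lin},*}(\delta)=T_{\mathrm{lin}}^{-1}\operatorname{diag}(e^{\lambda_1\delta},\dots,e^{\lambda_d\delta})T_{\mathrm{lin}}$. Fix $\delta\ge0$. Then there exist $t_0\ge0$ and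 $C>0$ such that for all $t_{\mathrm{skip}}>t_0$ the matrix $P_{\mathrm{lin}}(t_{\mathrm{skip}})$ is invertible and, with $\Phi_{\mathrm{lin},t_{\mathrm{skip}}}(\delta)=P_{\mathrm{lin}}(t_{\mathrm{skip}})^{-1}P_{\mathrm{lin}}(t_{\mathrm{skip}}+\delta)$, $$\|\Phi_{\mathrm{lin},*}(\delta)-\Phi_{\mathrm{lin},t_{\mathrm{skip}}}(\delta)\|\le C\exp\bigl((\lambda_{d+1}-\lambda_d)\,t_{\mathrm{skip}}\bigr).$$
   Context: Weighted spaces: $\phi_1(Q)=\exp(-2V(Q))/\int_\mathbb{R}\exp(-2V(q))\,dq$ (the stationary density), $\langle\rho_1,\rho_2\rangle_1=\int_\mathbb{R}\rho_1(Q)\rho_2(Q)/\phi_1(Q)\,dQ$; $\mathbb{L}^2_1(\mathbb{R};\mathbb{R})$ is the space of measurable $u$ with $\int_\mathbb{R}u^2/\phi_1\,dQ<\infty$, and $\mathbb{H}^\ell_1(\mathbb{R};\mathbb{R})$ the space of $u\in\mathbb{L}^2_1$ with $u^{(i)}\in\mathbb{L}^2_1$ for $i\le\ell$. $L$ is the Fokker–Planck operator of the SDE $dQ=-V'(Q)\,dt+dW_t$; it is self-adjoint with respect to $\langle\cdot,\cdot\rangle_1$ with pure point spectrum as stated. $P_{\mathrm{lin}}(t)$ is the lift–evolve–restrict map for the linear lifting $x\mapsto\sum_jx_j\rho_j$ and the moment restriction $\rho\mapsto(\int Q^{k-1}\rho\,dQ)_{k=1}^d$; $P_{\mathrm{lin},*}(t)$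 is the same map with the spectral projection $\rho\mapsto\sum_{j=1}^d\langle\phi_j,\rho\rangle_1\phi_j$ inserted after the lifting. *)

theory Defs
  imports "HOL-Analysis.Analysis" "Jordan_Normal_Form.Gauss_Jordan_Elimination"
begin

definition V :: "real \<Rightarrow> real \<Rightarrow> real \<Rightarrow> real" where
  "V mu nu Q = Q^4 / 4 - mu * Q^2 / 2 + nu * Q"

definition dV :: "real \<Rightarrow> real \<Rightarrow> real \<Rightarrow> real" where
  "dV mu nu Q = Q^3 - mu * Q + nu"

definition phi1 :: "real \<Rightarrow> real \<Rightarrow> real \<Rightarrow> real" where
  "phi1 mu nu Q = exp (- 2 * V mu nu Q) / (LINT q|lborel. exp (- 2 * V mu nu q))"

definition L2_1 :: "real \<Rightarrow> real \<Rightarrow> (real \<Rightarrow> real) \<Rightarrow> bool" where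
  "L2_1 mu nu u \<longleftrightarrow> u \<in> borel_measurable lborel \<and>
     integrable lborel (\<lambda>Q. (u Q)^2 / phi1 mu nu Q)"

definition ip1 :: "real \<Rightarrow> real \<Rightarrow> (real \<Rightarrow> real) \<Rightarrow> (real \<Rightarrow> real) \<Rightarrow> real" where
  "ip1 mu nu r1 r2 = (LINT Q|lborel. r1 Q * r2 Q / phi1 mu nu Q)"

definition norm1 :: "real \<Rightarrow> real \<Rightarrow> (real \<Rightarrow> real) \<Rightarrow> real" where
  "norm1 mu nu u = sqrt (ip1 mu nu u u)"

text \<open>H^2_1 (with classical derivatives): u twice differentiable, u, u', u'' in L^2_1.\<close>
definition H2_1 :: "real \<Rightarrow> real \<Rightarrow> (real \<Rightarrow> real) \<Rightarrow> bool" where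
  "H2_1 mu nu u \<longleftrightarrow> (\<forall>Q. u differentiable at Q) \<and> (\<forall>Q. deriv u differentiable at Q) \<and>
     L2_1 mu nu u \<and> L2_1 mu nu (deriv u) \<and> L2_1 mu nu (deriv (deriv u))"

definition FP_op :: "real \<Rightarrow> real \<Rightarrow> (real \<Rightarrow> real) \<Rightarrow> real \<Rightarrow> real" where
  "FP_op mu nu f Q = - deriv (\<lambda>q. dV mu nu q * f q) Q + 1/2 * deriv (deriv f) Q"

definition spec_partial :: "real \<Rightarrow> real \<Rightarrow> (nat \<Rightarrow> real \<Rightarrow> real) \<Rightarrow> (nat \<Rightarrow> real)
    \<Rightarrow> real \<Rightarrow> (real \<Rightarrow> real) \<Rightarrow> nat \<Rightarrow> real \<Rightarrow> real" where
  "spec_partial mu nu phi lam t rho N =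
     (\<lambda>Q. \<Sum>i\<in>{1..N}. exp (lam i * t) * ip1 mu nu (phi i) rho * phi i Q)"

text \<open>Semigroup M(t) = e^{tL} via the spectral theorem: the L^2_1-limit of the expansion
  (a representative, determined up to null sets).\<close>
definition semigroup :: "real \<Rightarrow> real \<Rightarrow> (nat \<Rightarrow> real \<Rightarrow> real) \<Rightarrow> (nat \<Rightarrow> real)
    \<Rightarrow> real \<Rightarrow> (real \<Rightarrow> real) \<Rightarrow> real \<Rightarrow> real" where
  "semigroup mu nu phi lam t rho = (SOME u. L2_1 mu nu u \<and>
     (\<lambda>N. norm1 mu nu (\<lambda>Q. u Q - spec_partial mu nu phi lam t rho N Q)) \<longlonglongrightarrow> 0)"

text \<open>Matrices (0-based JNF indices; entry (a,b) corresponds to paper indices (a+1,b+1)).\<close>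
definition T_lin :: "nat \<Rightarrow> real \<Rightarrow> real \<Rightarrow> (nat \<Rightarrow> real \<Rightarrow> real) \<Rightarrow> (nat \<Rightarrow> real \<Rightarrow> real) \<Rightarrow> real mat" where
  "T_lin d mu nu phi rho = mat d d (\<lambda>(l, j). ip1 mu nu (phi (l+1)) (rho (j+1)))"

definition R_mat :: "nat \<Rightarrow> (nat \<Rightarrow> real \<Rightarrow> real) \<Rightarrow> real mat" where
  "R_mat d phi = mat d d (\<lambda>(k, l). LINT Q|lborel. Q ^ k * phi (l+1) Q)"

definition exp_diag :: "nat \<Rightarrow> (nat \<Rightarrow> real) \<Rightarrow> real \<Rightarrow> real mat" where
  "exp_diag d lam t = mat d d (\<lambda>(i, j). if i = j then exp (lam (i+1) * t) else 0)"

definition P_lin :: "nat \<Rightarrow> real \<Rightarrow> real \<Rightarrow> (nat \<Rightarrow> real \<Rightarrow> real) \<Rightarrow> (nat \<Rightarrow> real)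
    \<Rightarrow> (nat \<Rightarrow> real \<Rightarrow> real) \<Rightarrow> real \<Rightarrow> real mat" where
  "P_lin d mu nu phi lam rho t = mat d d (\<lambda>(k, j).
     LINT Q|lborel. Q ^ k * semigroup mu nu phi lam t (rho (j+1)) Q)"

definition P_lin_star :: "nat \<Rightarrow> real \<Rightarrow> real \<Rightarrow> (nat \<Rightarrow> real \<Rightarrow> real) \<Rightarrow> (nat \<Rightarrow> real)
    \<Rightarrow> (nat \<Rightarrow> real \<Rightarrow> real) \<Rightarrow> real \<Rightarrow> real mat" where
  "P_lin_star d mu nu phi lam rho t = R_mat d phi * exp_diag d lam t * T_lin d mu nu phi rho"

definition minv :: "real mat \<Rightarrow> real mat" where
  "minv A = the (mat_inverse A)"

definition Phi_star :: "nat \<Rightarrow> real \<Rightarrow> real \<Rightarrow> (nat \<Rightarrow> real \<Rightarrow> real) \<Rightarrow> (nat \<Rightarrow> real)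
    \<Rightarrow> (nat \<Rightarrow> real \<Rightarrow> real) \<Rightarrow> real \<Rightarrow> real mat" where
  "Phi_star d mu nu phi lam rho \<delta> =
     minv (T_lin d mu nu phi rho) * exp_diag d lam \<delta> * T_lin d mu nu phi rho"

definition Phi_skip :: "nat \<Rightarrow> real \<Rightarrow> real \<Rightarrow> (nat \<Rightarrow> real \<Rightarrow> real) \<Rightarrow> (nat \<Rightarrow> real)
    \<Rightarrow> (nat \<Rightarrow> real \<Rightarrow> real) \<Rightarrow> real \<Rightarrow> real \<Rightarrow> real mat" where
  "Phi_skip d mu nu phi lam rho ts \<delta> =
     minv (P_lin d mu nu phi lam rho ts) * P_lin d mu nu phi lam rho (ts + \<delta>)"

text \<open>Frobenius norm (all matrix norms are equivalent in fixed dimension).\<close>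
definition fro_norm :: "real mat \<Rightarrow> real" where
  "fro_norm A = sqrt (\<Sum>i<dim_row A. \<Sum>j<dim_col A. (A $$ (i, j))^2)"

end

theory Submission
  imports Defs "HOL-Probability.Distributions" "Jordan_Normal_Form.Determinant"
begin


locale WS =
  fixes mu nu :: real
  assumes wpos: "\<And>Q. phi1 mu nu Q > 0"
begin

abbreviation "w \<equiv> phi1 mu nu"
abbreviation "L2 \<equiv> L2_1 mu nu"
abbreviation "ip \<equiv> ip1 mu nu"
abbreviation "nrm \<equiv> norm1 mu nu"

lemma w_meas[measurable]: "w \<in> borel_measurable borel"
  unfolding phi1_def V_def by measurable

lemma w_meas'[measurable]: "w \<in> borel_measurable lborel"
  by simp

lemma L2D: assumes "L2 u" shows "u \<in> borel_measurable lborel" "integrable lborel (\<lambda>Q. (u Q)^2 / w Q)"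
  using assms unfolding L2_1_def by auto

lemma L2I: "u \<in> borel_measurable lborel \<Longrightarrow> integrable lborel (\<lambda>Q. (u Q)^2 / w Q) \<Longrightarrow> L2 u"
  unfolding L2_1_def by auto

lemma ip_integrable:
  assumes u: "L2 u" and v: "L2 v"
  shows "integrable lborel (\<lambda>Q. u Q * v Q / w Q)"
proof (rule Bochner_Integration.integrable_bound[where f="\<lambda>Q. (u Q)^2 / w Q + (v Q)^2 / w Q"])
  show "integrable lborel (\<lambda>Q. (u Q)^2 / w Q + (v Q)^2 / w Q)"
    using L2D(2)[OF u] L2D(2)[OF v] by auto
  show "(\<lambda>Q. u Q * v Q / w Q) \<in> borel_measurable lborel"
    using L2D(1)[OF u] L2D(1)[OF v] by measurable
  show "AE Q in lborel. norm (u Q * v Q / w Q) \<le> norm ((u Q)^2 / w Q + (v Q)^2 / w Q)"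
  proof (rule AE_I2)
    fix Q
    have wp: "w Q > 0" by (rule wpos)
    have h: "2 * \<bar>u Q\<bar> * \<bar>v Q\<bar> \<le> \<bar>u Q\<bar>^2 + \<bar>v Q\<bar>^2" by (rule sum_squares_bound)
    have "\<bar>u Q * v Q\<bar> \<le> (u Q)^2 + (v Q)^2"
      using h mult_nonneg_nonneg[of "\<bar>u Q\<bar>" "\<bar>v Q\<bar>"] unfolding abs_mult power2_abs by linarith
    then have "\<bar>u Q * v Q\<bar> / w Q \<le> ((u Q)^2 + (v Q)^2) / w Q"
      using wp by (simp add: divide_right_mono)
    then show "norm (u Q * v Q / w Q) \<le> norm ((u Q)^2 / w Q + (v Q)^2 / w Q)"
      using wp by (simp add: abs_divide add_divide_distrib[symmetric])
  qed
qed

lemma L2_add: assumes u: "L2 u" and v: "L2 v" shows "L2 (\<lambda>Q. u Q + v Q)"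
proof (rule L2I)
  show "(\<lambda>Q. u Q + v Q) \<in> borel_measurable lborel" using L2D(1)[OF u] L2D(1)[OF v] by measurable
  have eq: "\<And>Q. (u Q + v Q)^2 / w Q = (u Q)^2 / w Q + (v Q)^2 / w Q + 2 * (u Q * v Q / w Q)"
    by (simp add: power2_sum add_divide_distrib)
  have "integrable lborel (\<lambda>Q. (u Q)^2 / w Q + (v Q)^2 / w Q + 2 * (u Q * v Q / w Q))"
    using L2D(2)[OF u] L2D(2)[OF v] ip_integrable[OF u v]
    by (intro Bochner_Integration.integrable_add integrable_mult_right)
  then show "integrable lborel (\<lambda>Q. (u Q + v Q)^2 / w Q)"
    by (simp only: eq)
qed

lemma L2_scale: assumes u: "L2 u" shows "L2 (\<lambda>Q. c * u Q)"
proof (rule L2I)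
  show "(\<lambda>Q. c * u Q) \<in> borel_measurable lborel" using L2D(1)[OF u] by measurable
  have eq: "\<And>Q. (c * u Q)^2 / w Q = c^2 * ((u Q)^2 / w Q)"
    by (simp add: power_mult_distrib)
  have "integrable lborel (\<lambda>Q. c^2 * ((u Q)^2 / w Q))"
    using L2D(2)[OF u] by (rule integrable_mult_right)
  then show "integrable lborel (\<lambda>Q. (c * u Q)^2 / w Q)"
    by (simp only: eq)
qed

lemma L2_zero: "L2 (\<lambda>Q. 0)"
  by (rule L2I) auto

lemma L2_diff: assumes u: "L2 u" and v: "L2 v" shows "L2 (\<lambda>Q. u Q - v Q)"
  using L2_add[OF u L2_scale[OF v, of "-1"]] by simp

lemma L2_sum: "finite I \<Longrightarrow> (\<And>i. i \<in> I \<Longrightarrow> L2 (f i)) \<Longrightarrow> L2 (\<lambda>Q. \<Sum>i\<in>I. a i * f i Q)"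
proof (induction I rule: finite_induct)
  case empty then show ?case using L2_zero by simp
next
  case (insert x F)
  then show ?case using L2_add[OF L2_scale[of "f x" "a x"], of "\<lambda>Q. \<Sum>i\<in>F. a i * f i Q"] by auto
qed

lemma ip_sym: "ip u v = ip v u"
  unfolding ip1_def by (simp add: mult.commute)

lemma ip_add: assumes "L2 u" "L2 v" "L2 z" shows "ip (\<lambda>Q. u Q + v Q) z = ip u z + ip v z"
proof -
  have "ip (\<lambda>Q. u Q + v Q) z = (LINT Q|lborel. u Q * z Q / w Q + v Q * z Q / w Q)"
    unfolding ip1_def by (simp add: field_simps add_divide_distrib)
  also have "\<dots> = ip u z + ip v z"
    unfolding ip1_def using ip_integrable assms by (intro Bochner_Integration.integral_add) auto
  finally show ?thesis .
qed

lemma ip_scale: "ip (\<lambda>Q. c * u Q) z = c * ip u z"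
proof -
  have eq: "\<And>Q. c * u Q * z Q / w Q = c * (u Q * z Q / w Q)" by simp
  show ?thesis unfolding ip1_def by (simp only: eq integral_mult_right_zero)
qed

lemma ip_diff: assumes "L2 u" "L2 v" "L2 z" shows "ip (\<lambda>Q. u Q - v Q) z = ip u z - ip v z"
  using ip_add[OF assms(1) L2_scale[OF assms(2), of "-1"] assms(3)] ip_scale[of "-1" v z] by simp

lemma ip_sum_left: "finite I \<Longrightarrow> (\<And>i. i \<in> I \<Longrightarrow> L2 (f i)) \<Longrightarrow> L2 z \<Longrightarrow>
   ip (\<lambda>Q. \<Sum>i\<in>I. a i * f i Q) z = (\<Sum>i\<in>I. a i * ip (f i) z)"
proof (induction I rule: finite_induct)
  case empty then show ?case unfolding ip1_def by simp
next
  case (insert x F)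
  have "ip (\<lambda>Q. \<Sum>i\<in>insert x F. a i * f i Q) z = ip (\<lambda>Q. a x * f x Q + (\<Sum>i\<in>F. a i * f i Q)) z"
    using insert by simp
  also have "\<dots> = ip (\<lambda>Q. a x * f x Q) z + ip (\<lambda>Q. \<Sum>i\<in>F. a i * f i Q) z"
    using insert by (intro ip_add L2_scale L2_sum) auto
  finally show ?case using insert by (simp add: ip_scale)
qed

lemma ip_nonneg: "ip u u \<ge> 0"
  unfolding ip1_def using wpos by (intro integral_nonneg_AE AE_I2) (auto intro!: divide_nonneg_pos)

lemma quad_lemma:
  fixes a b c :: real
  assumes "\<And>t. 0 \<le> a - 2 * t * b + t^2 * c" "c \<ge> 0"
  shows "b^2 \<le> a * c"
proof (cases "c > 0")
  case True
  have "0 \<le> a - 2 * (b/c) * b + (b/c)^2 * c" by (rule assms(1))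
  then have "0 \<le> (a - 2 * (b/c) * b + (b/c)^2 * c) * c" using True by simp
  also have "\<dots> = a * c - b^2" using True by (simp add: power2_eq_square field_simps)
  finally show ?thesis by simp
next
  case False
  then have c0: "c = 0" using assms(2) by simp
  have a0: "a \<ge> 0" using assms(1)[of 0] by simp
  have "b = 0"
  proof (rule ccontr)
    assume "b \<noteq> 0"
    have "0 \<le> a - 2 * ((a+1)/(2*b)) * b" using assms(1)[of "(a+1)/(2*b)"] c0 by simp
    also have "\<dots> = -1" using \<open>b \<noteq> 0\<close> by (simp add: field_simps)
    finally show False by simp
  qed
  then show ?thesis using a0 c0 by simp
qed

lemma cauchy_schwarz: assumes u: "L2 u" and v: "L2 v" shows "\<bar>ip u v\<bar> \<le> nrm u * nrm v"
proof -
  have "(ip u v)^2 \<le> ip u u * ip v v"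
  proof (rule quad_lemma)
    fix t
    have "0 \<le> ip (\<lambda>Q. u Q - t * v Q) (\<lambda>Q. u Q - t * v Q)" by (rule ip_nonneg)
    also have "\<dots> = ip u (\<lambda>Q. u Q - t * v Q) - t * ip v (\<lambda>Q. u Q - t * v Q)"
      using u v L2_scale[OF v] L2_diff[OF u L2_scale[OF v]] by (simp add: ip_diff ip_scale)
    also have "ip u (\<lambda>Q. u Q - t * v Q) = ip u u - t * ip v u"
      using u v L2_scale[OF v] L2_diff[OF u L2_scale[OF v]]
      by (simp add: ip_sym[of u "\<lambda>Q. u Q - t * v Q"] ip_diff ip_scale)
    also have "ip v (\<lambda>Q. u Q - t * v Q) = ip u v - t * ip v v"
      using u v L2_scale[OF v] L2_diff[OF u L2_scale[OF v]]
      by (simp add: ip_sym[of v "\<lambda>Q. u Q - t * v Q"] ip_diff ip_scale)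
    finally show "0 \<le> ip u u - 2 * t * ip u v + t^2 * ip v v"
      by (simp add: ip_sym[of v u] power2_eq_square algebra_simps)
  qed (rule ip_nonneg)
  then have "sqrt ((ip u v)^2) \<le> sqrt (ip u u * ip v v)" by (rule real_sqrt_le_mono)
  then show ?thesis unfolding norm1_def by (simp add: real_sqrt_mult)
qed

lemma nrm_nonneg: "nrm u \<ge> 0" unfolding norm1_def using ip_nonneg by simp

lemma nrm_sq: "(nrm u)^2 = ip u u" unfolding norm1_def using ip_nonneg by simp

lemma nrm_triangle: assumes u: "L2 u" and v: "L2 v" shows "nrm (\<lambda>Q. u Q + v Q) \<le> nrm u + nrm v"
proof -
  have "(nrm (\<lambda>Q. u Q + v Q))^2 = ip u u + 2 * ip u v + ip v v"
  proof -
    have "ip (\<lambda>Q. u Q + v Q) (\<lambda>Q. u Q + v Q) = ip u (\<lambda>Q. u Q + v Q) + ip v (\<lambda>Q. u Q + v Q)"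
      using u v L2_add[OF u v] by (rule ip_add)
    also have "ip u (\<lambda>Q. u Q + v Q) = ip u u + ip v u"
      by (subst ip_sym) (rule ip_add[OF u v u])
    also have "ip v (\<lambda>Q. u Q + v Q) = ip u v + ip v v"
      by (subst ip_sym) (rule ip_add[OF u v v])
    finally show ?thesis unfolding nrm_sq using ip_sym[of v u] by simp
  qed
  also have "\<dots> \<le> (nrm u)^2 + 2 * (nrm u * nrm v) + (nrm v)^2"
    using cauchy_schwarz[OF u v] by (simp add: nrm_sq)
  also have "\<dots> = (nrm u + nrm v)^2" by (simp add: power2_eq_square algebra_simps)
  finally show ?thesis using nrm_nonneg[of u] nrm_nonneg[of v]
    by (meson add_nonneg_nonneg power2_le_imp_le)
qed

end

locale ON = WS +
  fixes phi :: "nat \<Rightarrow> real \<Rightarrow> real"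
  assumes phiL2: "\<And>i. i \<ge> 1 \<Longrightarrow> L2 (phi i)"
    and orth: "\<And>i j. i \<ge> 1 \<Longrightarrow> j \<ge> 1 \<Longrightarrow> ip (phi i) (phi j) = (if i = j then 1 else 0)"
begin

lemma phiL2_in: "I \<subseteq> {1..} \<Longrightarrow> i \<in> I \<Longrightarrow> L2 (phi i)"
  using phiL2 by auto

lemma L2_psum: "finite I \<Longrightarrow> I \<subseteq> {1..} \<Longrightarrow> L2 (\<lambda>Q. \<Sum>i\<in>I. a i * phi i Q)"
  by (rule L2_sum) (auto intro!: phiL2 simp: subset_iff)

lemma ip_psum_phi: assumes "finite I" "I \<subseteq> {1..}" "j \<ge> 1"
  shows "ip (\<lambda>Q. \<Sum>i\<in>I. a i * phi i Q) (phi j) = (if j \<in> I then a j else 0)"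
proof -
  have "ip (\<lambda>Q. \<Sum>i\<in>I. a i * phi i Q) (phi j) = (\<Sum>i\<in>I. a i * ip (phi i) (phi j))"
    using assms by (intro ip_sum_left) (auto intro!: phiL2 simp: subset_iff)
  also have "\<dots> = (\<Sum>i\<in>I. if i = j then a i else 0)"
    using assms by (intro sum.cong) (auto simp: orth)
  also have "\<dots> = (if j \<in> I then a j else 0)"
    using assms(1) by (simp add: sum.delta')
  finally show ?thesis .
qed

lemma ip_psum_psum: assumes "finite I" "I \<subseteq> {1..}"
  shows "ip (\<lambda>Q. \<Sum>i\<in>I. a i * phi i Q) (\<lambda>Q. \<Sum>i\<in>I. b i * phi i Q) = (\<Sum>i\<in>I. a i * b i)"
proof -
  have "ip (\<lambda>Q. \<Sum>i\<in>I. a i * phi i Q) (\<lambda>Q. \<Sum>i\<in>I. b i * phi i Q)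
      = (\<Sum>i\<in>I. a i * ip (phi i) (\<lambda>Q. \<Sum>i\<in>I. b i * phi i Q))"
    using assms by (intro ip_sum_left L2_psum) (auto intro!: phiL2 simp: subset_iff)
  also have "\<dots> = (\<Sum>i\<in>I. a i * b i)"
  proof (intro sum.cong refl)
    fix i assume i: "i \<in> I"
    have "ip (phi i) (\<lambda>Q. \<Sum>i\<in>I. b i * phi i Q) = ip (\<lambda>Q. \<Sum>i\<in>I. b i * phi i Q) (phi i)"
      by (rule ip_sym)
    also have "\<dots> = b i" using assms i by (subst ip_psum_phi) auto
    finally show "a i * ip (phi i) (\<lambda>Q. \<Sum>i\<in>I. b i * phi i Q) = a i * b i" by simp
  qed
  finally show ?thesis .
qed

lemma bessel: assumes z: "L2 z"
  shows "(\<Sum>i\<in>{1..N}. (ip (phi i) z)^2) \<le> ip z z"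
proof -
  define c where "c i = ip (phi i) z" for i
  define S where "S = (\<lambda>Q. \<Sum>i\<in>{1..N}. c i * phi i Q)"
  have SL: "L2 S" unfolding S_def by (rule L2_psum) auto
  have Sz: "ip S z = (\<Sum>i\<in>{1..N}. c i * c i)"
    unfolding S_def c_def using z by (subst ip_sum_left) (auto intro!: phiL2 simp: subset_iff)
  have SS: "ip S S = (\<Sum>i\<in>{1..N}. c i * c i)"
    unfolding S_def by (rule ip_psum_psum) auto
  have "0 \<le> ip (\<lambda>Q. z Q - S Q) (\<lambda>Q. z Q - S Q)" by (rule ip_nonneg)
  also have "\<dots> = ip z (\<lambda>Q. z Q - S Q) - ip S (\<lambda>Q. z Q - S Q)"
    using z SL L2_diff[OF z SL] by (simp add: ip_diff)
  also have "ip z (\<lambda>Q. z Q - S Q) = ip z z - ip S z"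
    using z SL by (subst ip_sym) (rule ip_diff)
  also have "ip S (\<lambda>Q. z Q - S Q) = ip z S - ip S S"
    using z SL by (subst ip_sym) (rule ip_diff)
  also have "ip z S = ip S z" by (rule ip_sym)
  finally have "0 \<le> ip z z - ip S z - (ip S z - ip S S)" .
  then show ?thesis unfolding Sz SS c_def by (simp add: power2_eq_square)
qed

lemma psum_diff: assumes "n \<le> m"
  shows "(\<lambda>Q. (\<Sum>i\<in>{1..m}. a i * phi i Q) - (\<Sum>i\<in>{1..n}. a i * phi i Q)) = (\<lambda>Q. \<Sum>i\<in>{n<..m}. a i * phi i Q)"
proof
  fix Q
  have "{1..m} = {1..n} \<union> {n<..m}" using assms by auto
  then have "(\<Sum>i\<in>{1..m}. a i * phi i Q) = (\<Sum>i\<in>{1..n}. a i * phi i Q) + (\<Sum>i\<in>{n<..m}. a i * phi i Q)"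
    by (simp add: sum.union_disjoint ivl_disj_int)
  then show "(\<Sum>i\<in>{1..m}. a i * phi i Q) - (\<Sum>i\<in>{1..n}. a i * phi i Q) = (\<Sum>i\<in>{n<..m}. a i * phi i Q)"
    by simp
qed

lemma ip_psum_diff: assumes "n \<le> m"
  shows "ip (\<lambda>Q. (\<Sum>i\<in>{1..m}. a i * phi i Q) - (\<Sum>i\<in>{1..n}. a i * phi i Q))
            (\<lambda>Q. (\<Sum>i\<in>{1..m}. a i * phi i Q) - (\<Sum>i\<in>{1..n}. a i * phi i Q))
         = (\<Sum>i\<in>{1..m}. (a i)^2) - (\<Sum>i\<in>{1..n}. (a i)^2)"
proof -
  have "{1..m} = {1..n} \<union> {n<..m}" using assms by auto
  then have e: "(\<Sum>i\<in>{1..m}. (a i)^2) = (\<Sum>i\<in>{1..n}. (a i)^2) + (\<Sum>i\<in>{n<..m}. (a i)^2)"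
    by (simp add: sum.union_disjoint ivl_disj_int)
  show ?thesis unfolding psum_diff[OF assms] e
    by (subst ip_psum_psum) (auto simp: power2_eq_square)
qed

end




context ON
begin

lemma ip_swap_diff: "ip (\<lambda>Q. a Q - b Q) (\<lambda>Q. a Q - b Q) = ip (\<lambda>Q. b Q - a Q) (\<lambda>Q. b Q - a Q)"
proof -
  have e: "(\<lambda>Q. (a Q - b Q) * (a Q - b Q) / w Q) = (\<lambda>Q. (b Q - a Q) * (b Q - a Q) / w Q)"
    by (rule ext) (simp add: algebra_simps)
  show ?thesis unfolding ip1_def by (simp only: e)
qed

lemma riesz_fischer:
  assumes bnd: "\<And>N. (\<Sum>i\<in>{1..N}. (a i)^2) \<le> B"
  shows "\<exists>u. L2 u \<and> (\<lambda>N. nrm (\<lambda>Q. u Q - (\<Sum>i\<in>{1..N}. a i * phi i Q))) \<longlonglongrightarrow> 0"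
proof -
  define s where "s N = (\<Sum>i\<in>{1..N}. (a i)^2)" for N
  define S where "S N = (\<lambda>Q. \<Sum>i\<in>{1..N}. a i * phi i Q)" for N
  have SL: "L2 (S N)" for N unfolding S_def by (rule L2_psum) auto
  have s_mono: "s n \<le> s m" if "n \<le> m" for n m
    unfolding s_def using that by (intro sum_mono2) auto
  have ipS: "ip (\<lambda>Q. S m Q - S n Q) (\<lambda>Q. S m Q - S n Q) = s m - s n" if "n \<le> m" for n m
    unfolding S_def s_def using ip_psum_diff[OF that] .
  have "s \<longlonglongrightarrow> (SUP i. s i)"
    using bnd s_mono by (intro LIMSEQ_incseq_SUP) (auto simp: s_def incseq_def bdd_above_def)
  then have cs: "Cauchy s" by (rule LIMSEQ_imp_Cauchy)
  have cau: "\<exists>n0. \<forall>n m. n0 \<le> n \<longrightarrow> n \<le> m \<longrightarrow> s m - s n \<le> (1/8)^k" for k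
  proof -
    obtain M where M: "\<forall>m\<ge>M. \<forall>n\<ge>M. norm (s m - s n) < (1/8)^k"
      using CauchyD[OF cs, of "(1/8)^k"] by auto
    show ?thesis
    proof (intro exI allI impI)
      fix n m assume "M \<le> n" "n \<le> m"
      then have "norm (s m - s n) < (1/8)^k" using M by auto
      then show "s m - s n \<le> (1/8)^k" by simp
    qed
  qed
  obtain n0 where n0': "\<forall>k. \<forall>n m. n0 k \<le> n \<longrightarrow> n \<le> m \<longrightarrow> s m - s n \<le> (1/8)^k"
  proof -
    have "\<forall>k. \<exists>n0. \<forall>n m. n0 \<le> n \<longrightarrow> n \<le> m \<longrightarrow> s m - s n \<le> (1/8)^k" using cau by blast
    then show ?thesis using that by (metis (no_types) choice)
  qed
  have n0: "\<And>k n m. n0 k \<le> n \<Longrightarrow> n \<le> m \<Longrightarrow> s m - s n \<le> (1/8)^k"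
    using n0' by blast
  define Nk where "Nk k = (\<Sum>j\<le>k. n0 j)" for k
  have Nk_mono: "Nk j \<le> Nk k" if "j \<le> k" for j k
    unfolding Nk_def using that by (intro sum_mono2) auto
  have Nk_ge: "n0 k \<le> Nk k" for k
    unfolding Nk_def by (rule member_le_sum) auto
  have key: "s m - s (Nk j) \<le> (1/8)^j" if "Nk j \<le> m" for j m
    using n0[OF Nk_ge that] .
  define T where "T k = S (Nk k)" for k
  have TL: "L2 (T k)" for k unfolding T_def by (rule SL)
  have Tmeas[measurable]: "T k \<in> borel_measurable lborel" for k using L2D(1)[OF TL] .
  have ipT: "ip (\<lambda>Q. T k Q - T j Q) (\<lambda>Q. T k Q - T j Q) \<le> (1/8)^j" if "j \<le> k" for j k
    unfolding T_def using ipS[OF Nk_mono[OF that]] key[OF Nk_mono[OF that]] by simp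
  define D where "D k = (\<lambda>Q. T (Suc k) Q - T k Q)" for k
  have DL: "L2 (D k)" for k unfolding D_def by (intro L2_diff TL)
  have Dmeas[measurable]: "D k \<in> borel_measurable lborel" for k using L2D(1)[OF DL] .
  have ipD: "ip (D k) (D k) \<le> (1/8)^k" for k unfolding D_def by (rule ipT) simp
  have ipD_eq: "ip (D k) (D k) = (LINT Q|lborel. (D k Q)^2 / w Q)" for k
    unfolding ip1_def by (simp add: power2_eq_square)
  define h where "h Q = (\<Sum>k. ennreal (2^k * ((D k Q)^2 / w Q)))" for Q
  have hmeas[measurable]: "h \<in> borel_measurable lborel" unfolding h_def by measurable
  have "integral\<^sup>N lborel h = (\<Sum>k. \<integral>\<^sup>+Q. ennreal (2^k * ((D k Q)^2 / w Q)) \<partial>lborel)"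
    unfolding h_def by (rule nn_integral_suminf) measurable
  also have "\<dots> = (\<Sum>k. ennreal (2^k * ip (D k) (D k)))"
  proof (rule suminf_cong)
    fix k
    have "(\<integral>\<^sup>+Q. ennreal (2^k * ((D k Q)^2 / w Q)) \<partial>lborel) = ennreal (LINT Q|lborel. 2^k * ((D k Q)^2 / w Q))"
      using L2D(2)[OF DL[of k]] wpos
      by (intro nn_integral_eq_integral integrable_mult_right AE_I2) (auto intro!: divide_nonneg_pos)
    then show "(\<integral>\<^sup>+Q. ennreal (2^k * ((D k Q)^2 / w Q)) \<partial>lborel) = ennreal (2^k * ip (D k) (D k))"
      by (simp only: integral_mult_right_zero ipD_eq)
  qed
  also have "\<dots> \<le> (\<Sum>k. ennreal ((1/4)^k))"
  proof (intro suminf_le summableI ennreal_leI)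
    fix k :: nat
    have "2^k * ip (D k) (D k) \<le> 2^k * (1/8)^k" using ipD[of k] by simp
    also have "\<dots> = (1/4)^k" by (simp add: power_mult_distrib[symmetric])
    finally show "2^k * ip (D k) (D k) \<le> (1/4::real)^k" .
  qed
  also have "\<dots> = ennreal (\<Sum>k. (1/4::real)^k)"
    by (rule suminf_ennreal2) (auto intro: summable_geometric)
  finally have hfin: "integral\<^sup>N lborel h \<noteq> \<infinity>" by (auto simp: top_unique)
  have hAE: "AE Q in lborel. h Q \<noteq> \<infinity>" by (rule nn_integral_PInf_AE[OF hmeas hfin])
  have convT: "AE Q in lborel. convergent (\<lambda>k. T k Q)"
    using hAE
  proof (rule AE_mp, intro AE_I2 impI)
    fix Q assume hQ: "h Q \<noteq> \<infinity>"
    define H where "H = enn2real (h Q)"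
    have hH: "h Q = ennreal H" unfolding H_def using hQ by (simp add: less_top)
    have H0: "H \<ge> 0" unfolding H_def by simp
    have wQ: "w Q > 0" by (rule wpos)
    have trm: "2^k * ((D k Q)^2 / w Q) \<le> H" for k
    proof -
      have "ennreal (2^k * ((D k Q)^2 / w Q)) \<le> h Q"
        unfolding h_def using sum_le_suminf[of "\<lambda>k. ennreal (2^k * ((D k Q)^2 / w Q))" "{k}"] by auto
      then show ?thesis using hH H0 by (simp add: ennreal_le_iff)
    qed
    define c where "c = sqrt (H * w Q)"
    have bndD: "norm (D k Q) \<le> c * (sqrt (1/2))^k" for k
    proof -
      have "(D k Q)^2 \<le> H * w Q * (1/2)^k"
        using trm[of k] wQ by (simp add: field_simps power_divide)
      then have "sqrt ((D k Q)^2) \<le> sqrt (H * w Q * (1/2)^k)" by (rule real_sqrt_le_mono)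
      then have "\<bar>D k Q\<bar> \<le> sqrt (H * w Q * (1/2)^k)" by (simp only: real_sqrt_abs)
      also have "sqrt (H * w Q * (1/2)^k) = c * (sqrt (1/2))^k"
        unfolding c_def by (simp only: real_sqrt_mult real_sqrt_power)
      finally show ?thesis by simp
    qed
    have sg: "summable (\<lambda>k. c * (sqrt (1/2))^k)"
      by (intro summable_mult summable_geometric) (simp add: real_sqrt_lt_1_iff)
    have sD: "summable (\<lambda>k. D k Q)"
      by (rule summable_comparison_test[OF _ sg]) (use bndD in auto)
    have "(\<lambda>k. T 0 Q + (\<Sum>j<k. D j Q)) \<longlonglongrightarrow> T 0 Q + suminf (\<lambda>k. D k Q)"
      by (intro tendsto_add tendsto_const summable_LIMSEQ sD)
    moreover have "T 0 Q + (\<Sum>j<k. D j Q) = T k Q" for k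
      unfolding D_def using sum_lessThan_telescope[of "\<lambda>j. T j Q" k] by simp
    ultimately show "convergent (\<lambda>k. T k Q)" unfolding convergent_def by auto
  qed
  define u where "u Q = lim (\<lambda>k. T k Q)" for Q
  have umeas[measurable]: "u \<in> borel_measurable lborel"
    unfolding u_def by measurable
  have ulim: "AE Q in lborel. (\<lambda>k. T k Q) \<longlonglongrightarrow> u Q"
    using convT by eventually_elim (simp add: u_def convergent_LIMSEQ_iff)
  have fatou: "L2 (\<lambda>Q. u Q - T j Q) \<and> ip (\<lambda>Q. u Q - T j Q) (\<lambda>Q. u Q - T j Q) \<le> (1/8)^j" for j
  proof -
    define f where "f k Q = ennreal ((T k Q - T j Q)^2 / w Q)" for k Q
    have fmeas[measurable]: "f k \<in> borel_measurable lborel" for k unfolding f_def by measurable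
    have "(\<integral>\<^sup>+Q. ennreal ((u Q - T j Q)^2 / w Q) \<partial>lborel) = (\<integral>\<^sup>+Q. liminf (\<lambda>k. f k Q) \<partial>lborel)"
    proof (rule nn_integral_cong_AE)
      show "AE Q in lborel. ennreal ((u Q - T j Q)^2 / w Q) = liminf (\<lambda>k. f k Q)"
        using ulim
      proof eventually_elim
        case (elim Q)
        have "(\<lambda>k. f k Q) \<longlonglongrightarrow> ennreal ((u Q - T j Q)^2 / w Q)"
          unfolding f_def by (intro tendsto_ennrealI tendsto_intros elim) (use wpos[of Q] in auto)
        then show ?case by (rule lim_imp_Liminf[symmetric, rotated]) simp
      qed
    qed
    also have "\<dots> \<le> liminf (\<lambda>k. integral\<^sup>N lborel (f k))"
      by (rule nn_integral_liminf) measurable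
    also have "\<dots> \<le> ennreal ((1/8)^j)"
    proof (rule Liminf_le)
      show "\<forall>\<^sub>F k in sequentially. integral\<^sup>N lborel (f k) \<le> ennreal ((1/8)^j)"
        unfolding eventually_sequentially
      proof (intro exI allI impI)
        fix k assume jk: "j \<le> k"
        have L: "L2 (\<lambda>Q. T k Q - T j Q)" by (intro L2_diff TL)
        have "integral\<^sup>N lborel (f k) = ennreal (LINT Q|lborel. (T k Q - T j Q)^2 / w Q)"
          unfolding f_def using L2D(2)[OF L] wpos
          by (intro nn_integral_eq_integral AE_I2) (auto intro!: divide_nonneg_pos)
        also have "(LINT Q|lborel. (T k Q - T j Q)^2 / w Q) = ip (\<lambda>Q. T k Q - T j Q) (\<lambda>Q. T k Q - T j Q)"
          unfolding ip1_def by (simp add: power2_eq_square)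
        finally show "integral\<^sup>N lborel (f k) \<le> ennreal ((1/8)^j)"
          using ipT[OF jk] by (simp add: ennreal_leI)
      qed
    qed simp
    finally have nn: "(\<integral>\<^sup>+Q. ennreal ((u Q - T j Q)^2 / w Q) \<partial>lborel) \<le> ennreal ((1/8)^j)" .
    have int: "integrable lborel (\<lambda>Q. (u Q - T j Q)^2 / w Q)"
    proof (rule integrableI_nonneg)
      show "AE Q in lborel. 0 \<le> (u Q - T j Q)^2 / w Q"
        using wpos by (intro AE_I2) (auto intro!: divide_nonneg_pos)
      show "(\<integral>\<^sup>+Q. ennreal ((u Q - T j Q)^2 / w Q) \<partial>lborel) < \<infinity>"
        using nn by (simp add: le_less_trans)
    qed measurable
    have L2u: "L2 (\<lambda>Q. u Q - T j Q)" by (rule L2I) (measurable, rule int)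
    have "ip (\<lambda>Q. u Q - T j Q) (\<lambda>Q. u Q - T j Q) = (LINT Q|lborel. (u Q - T j Q)^2 / w Q)"
      unfolding ip1_def by (simp add: power2_eq_square)
    also have "\<dots> = enn2real (\<integral>\<^sup>+Q. ennreal ((u Q - T j Q)^2 / w Q) \<partial>lborel)"
      using wpos by (intro integral_eq_nn_integral AE_I2) (auto intro!: divide_nonneg_pos)
    also have "\<dots> \<le> (1/8)^j" using nn by (intro enn2real_leI) auto
    finally show ?thesis using L2u by simp
  qed
  have uL2: "L2 u"
  proof -
    have "L2 (\<lambda>Q. (u Q - T 0 Q) + T 0 Q)" using fatou[of 0] TL[of 0] by (intro L2_add) auto
    then show ?thesis by simp
  qed
  have "(\<lambda>N. nrm (\<lambda>Q. u Q - S N Q)) \<longlonglongrightarrow> 0"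
    unfolding LIMSEQ_iff
  proof (intro allI impI)
    fix r :: real assume r: "r > 0"
    obtain j where j: "(1/8::real)^j < (r/2)^2" using real_arch_pow_inv[of "(r/2)^2" "1/8"] r by auto
    have sj: "sqrt ((1/8::real)^j) < r/2"
      using real_sqrt_less_mono[OF j] r by simp
    show "\<exists>no. \<forall>N\<ge>no. norm (nrm (\<lambda>Q. u Q - S N Q) - 0) < r"
    proof (intro exI allI impI)
      fix N assume N: "Nk j \<le> N"
      have e: "(\<lambda>Q. u Q - S N Q) = (\<lambda>Q. (u Q - T j Q) + (T j Q - S N Q))" by auto
      have L1: "L2 (\<lambda>Q. u Q - T j Q)" using fatou by blast
      have L2': "L2 (\<lambda>Q. T j Q - S N Q)" by (intro L2_diff TL SL)
      have n1: "nrm (\<lambda>Q. u Q - T j Q) < r/2"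
        using fatou[of j] sj unfolding norm1_def
        by (meson le_less_trans real_sqrt_le_mono)
      have "ip (\<lambda>Q. T j Q - S N Q) (\<lambda>Q. T j Q - S N Q) = s N - s (Nk j)"
        unfolding T_def by (subst ip_swap_diff) (rule ipS[OF N])
      also have "\<dots> \<le> (1/8)^j" by (rule key[OF N])
      finally have n2: "nrm (\<lambda>Q. T j Q - S N Q) < r/2"
        using sj unfolding norm1_def by (meson le_less_trans real_sqrt_le_mono)
      have "nrm (\<lambda>Q. u Q - S N Q) \<le> nrm (\<lambda>Q. u Q - T j Q) + nrm (\<lambda>Q. T j Q - S N Q)"
        unfolding e by (rule nrm_triangle[OF L1 L2'])
      then show "norm (nrm (\<lambda>Q. u Q - S N Q) - 0) < r"
        using n1 n2 nrm_nonneg[of "\<lambda>Q. u Q - S N Q"] by simp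
    qed
  qed
  then show ?thesis using uL2 unfolding S_def by blast
qed

end

lemma V_bound: "- 2 * V mu nu Q \<le> ((\<bar>mu + 1/2\<bar> + 1/2)^2/2 + 2*nu^2) - Q^2/2"
proof -
  define c where "c = \<bar>mu + 1/2\<bar> + 1/2"
  have h1: "mu * Q^2 + Q^2/2 \<le> c * Q^2 - Q^2/2"
  proof -
    have "(mu + 1/2) * Q^2 \<le> (c - 1/2) * Q^2" unfolding c_def by (intro mult_right_mono) auto
    then show ?thesis by (simp add: algebra_simps)
  qed
  have h2: "- 2 * (nu * Q) \<le> 2 * nu^2 + Q^2/2"
  proof -
    have "0 \<le> (2*nu + Q)^2" by simp
    then show ?thesis by (simp add: power2_eq_square algebra_simps)
  qed
  have q4: "(Q^2)^2 = Q^4" by (simp flip: power_mult)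
  have h3: "0 \<le> Q^4 - 2*(c*Q^2) + c^2"
  proof -
    have "0 \<le> (Q^2 - c)^2" by simp
    also have "\<dots> = (Q^2)^2 - 2*(c*Q^2) + c^2" by (simp add: power2_diff algebra_simps)
    finally show ?thesis unfolding q4 .
  qed
  have ee: "- 2 * V mu nu Q = - (Q^4)/2 + mu * Q^2 - 2 * (nu * Q)"
    unfolding V_def by (simp add: algebra_simps)
  show ?thesis unfolding ee c_def[symmetric] using h1 h2 h3 by linarith
qed

lemma mom_int: "integrable lborel (\<lambda>Q. Q^n * exp (- 2 * V mu nu Q))"
proof -
  define C0 where "C0 = (\<bar>mu + 1/2\<bar> + 1/2)^2/2 + 2*nu^2"
  have I0: "integrable lborel (\<lambda>x. normal_density 0 1 x * \<bar>x - 0\<bar>^n)" by (rule integrable_normal_moment_abs) simp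
  have I1: "integrable lborel (\<lambda>x. (exp C0 * sqrt (2*pi)) * (normal_density 0 1 x * \<bar>x - 0\<bar>^n))"
    using I0 by (rule integrable_mult_right)
  show ?thesis
  proof (rule Bochner_Integration.integrable_bound[OF I1])
    show "(\<lambda>Q. Q^n * exp (- 2 * V mu nu Q)) \<in> borel_measurable lborel" unfolding V_def by measurable
    show "AE Q in lborel. norm (Q^n * exp (- 2 * V mu nu Q)) \<le> norm ((exp C0 * sqrt (2*pi)) * (normal_density 0 1 Q * \<bar>Q - 0\<bar>^n))"
    proof (rule AE_I2)
      fix Q
      have "exp (- 2 * V mu nu Q) \<le> exp (C0 + - (Q^2/2))"
        using V_bound[of mu nu Q] unfolding C0_def by simp
      also have "\<dots> = exp C0 * exp (- Q\<^sup>2 / 2)" by (subst exp_add[symmetric]) simp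
      finally have e: "exp (- 2 * V mu nu Q) \<le> exp C0 * exp (- Q\<^sup>2 / 2)" .
      have nd: "normal_density 0 1 Q = (1 / sqrt (2 * pi)) * exp (- Q\<^sup>2 / 2)"
        by (rule std_normal_density_def)
      have "norm (Q^n * exp (- 2 * V mu nu Q)) = \<bar>Q\<bar>^n * exp (- 2 * V mu nu Q)"
        by (simp add: abs_mult power_abs)
      also have "\<dots> \<le> \<bar>Q\<bar>^n * (exp C0 * exp (- Q\<^sup>2 / 2))"
        using e by (intro mult_left_mono) auto
      also have "\<dots> = (exp C0 * sqrt (2*pi)) * (normal_density 0 1 Q * \<bar>Q - 0\<bar>^n)"
        unfolding nd by simp
      also have "\<dots> = norm ((exp C0 * sqrt (2*pi)) * (normal_density 0 1 Q * \<bar>Q - 0\<bar>^n))"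
        by (simp add: abs_mult)
      finally show "norm (Q^n * exp (- 2 * V mu nu Q)) \<le> norm ((exp C0 * sqrt (2*pi)) * (normal_density 0 1 Q * \<bar>Q - 0\<bar>^n))" .
    qed
  qed
qed

context WS
begin

lemma gk_L2: "L2 (\<lambda>Q. Q^k * w Q)"
proof (rule L2I)
  show "(\<lambda>Q. Q^k * w Q) \<in> borel_measurable lborel" by measurable
  have eq: "(Q^k * w Q)^2 / w Q = Q^(k*2) * exp (- 2 * V mu nu Q) / (LINT q|lborel. exp (- 2 * V mu nu q))" for Q
  proof -
    have "(Q^k * w Q)^2 / w Q = (Q^k)^2 * w Q"
      using wpos[of Q] by (simp add: power2_eq_square field_simps)
    also have "(Q^k)^2 = Q^(k*2)" by (rule power_mult[symmetric])
    finally have "(Q^k * w Q)^2 / w Q = Q^(k*2) * w Q" .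
    then show ?thesis unfolding phi1_def by simp
  qed
  show "integrable lborel (\<lambda>Q. (Q^k * w Q)^2 / w Q)"
    unfolding eq by (intro integrable_divide_zero mom_int)
qed

lemma ip_gk: "ip (\<lambda>Q. Q^k * w Q) f = (LINT Q|lborel. Q^k * f Q)"
proof -
  have "Q^k * w Q * f Q / w Q = Q^k * f Q" for Q using wpos[of Q] by (simp add: field_simps)
  then show ?thesis unfolding ip1_def by simp
qed

end

context ON
begin

lemma semigroup_ok:
  assumes z: "L2 z" and lamneg: "\<And>i. i \<ge> 1 \<Longrightarrow> lam i \<le> 0" and t: "t \<ge> 0"
  shows "L2 (semigroup mu nu phi lam t z) \<and>
    (\<lambda>N. nrm (\<lambda>Q. semigroup mu nu phi lam t z Q - spec_partial mu nu phi lam t z N Q)) \<longlonglongrightarrow> 0"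
proof -
  define a where "a i = exp (lam i * t) * ip (phi i) z" for i
  have bnd: "(\<Sum>i\<in>{1..N}. (a i)^2) \<le> ip z z" for N
  proof -
    have "(\<Sum>i\<in>{1..N}. (a i)^2) \<le> (\<Sum>i\<in>{1..N}. (ip (phi i) z)^2)"
    proof (rule sum_mono)
      fix i assume i: "i \<in> {1..N}"
      have "exp (lam i * t) \<le> 1" using lamneg[of i] i t by (simp add: mult_nonpos_nonneg)
      then have "(exp (lam i * t))^2 \<le> 1" by (simp add: power_le_one)
      then have "(exp (lam i * t))^2 * (ip (phi i) z)^2 \<le> 1 * (ip (phi i) z)^2"
        by (intro mult_right_mono) auto
      then show "(a i)^2 \<le> (ip (phi i) z)^2" unfolding a_def by (simp add: power_mult_distrib)
    qed
    also have "\<dots> \<le> ip z z" by (rule bessel[OF z])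
    finally show ?thesis .
  qed
  obtain u where u: "L2 u" "(\<lambda>N. nrm (\<lambda>Q. u Q - (\<Sum>i\<in>{1..N}. a i * phi i Q))) \<longlonglongrightarrow> 0"
    using riesz_fischer[OF bnd] by blast
  have sp: "spec_partial mu nu phi lam t z N Q = (\<Sum>i\<in>{1..N}. a i * phi i Q)" for N Q
    unfolding spec_partial_def a_def by simp
  have ex: "\<exists>u. L2 u \<and> (\<lambda>N. nrm (\<lambda>Q. u Q - spec_partial mu nu phi lam t z N Q)) \<longlonglongrightarrow> 0"
    using u unfolding sp by blast
  show ?thesis unfolding semigroup_def by (rule someI_ex[OF ex])
qed

lemma moment_limit:
  assumes z: "L2 z" and lamneg: "\<And>i. i \<ge> 1 \<Longrightarrow> lam i \<le> 0" and t: "t \<ge> 0" and g: "L2 g"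
  shows "(\<lambda>N. \<Sum>i\<in>{1..N}. exp (lam i * t) * ip (phi i) z * ip g (phi i)) \<longlonglongrightarrow> ip g (semigroup mu nu phi lam t z)"
proof -
  define U where "U = semigroup mu nu phi lam t z"
  define S where "S N = spec_partial mu nu phi lam t z N" for N
  have U: "L2 U" "(\<lambda>N. nrm (\<lambda>Q. U Q - S N Q)) \<longlonglongrightarrow> 0"
    using semigroup_ok[OF z lamneg t] unfolding U_def S_def by auto
  have SL: "L2 (S N)" for N
    unfolding S_def spec_partial_def by (rule L2_psum) auto
  have ipS: "ip g (S N) = (\<Sum>i\<in>{1..N}. exp (lam i * t) * ip (phi i) z * ip g (phi i))" for N
  proof -
    have "ip g (S N) = ip (S N) g" by (rule ip_sym)
    also have "\<dots> = (\<Sum>i\<in>{1..N}. (exp (lam i * t) * ip (phi i) z) * ip (phi i) g)"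
      unfolding S_def spec_partial_def using g by (subst ip_sum_left) (auto intro!: phiL2)
    also have "\<dots> = (\<Sum>i\<in>{1..N}. exp (lam i * t) * ip (phi i) z * ip g (phi i))"
      by (simp add: ip_sym[of "phi _" g])
    finally show ?thesis .
  qed
  have "(\<lambda>N. ip g U - ip g (S N)) \<longlonglongrightarrow> 0"
  proof (rule tendsto_sandwich[where f="\<lambda>N. - (nrm g * nrm (\<lambda>Q. U Q - S N Q))" and h="\<lambda>N. nrm g * nrm (\<lambda>Q. U Q - S N Q)"])
    have b: "\<bar>ip g U - ip g (S N)\<bar> \<le> nrm g * nrm (\<lambda>Q. U Q - S N Q)" for N
    proof -
      have "ip g U - ip g (S N) = ip (\<lambda>Q. U Q - S N Q) g"
        using U(1) SL g by (simp add: ip_diff ip_sym[of g])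
      also have "\<bar>\<dots>\<bar> \<le> nrm (\<lambda>Q. U Q - S N Q) * nrm g"
        by (rule cauchy_schwarz) (use U(1) SL g L2_diff in auto)
      finally show ?thesis by (simp add: mult.commute)
    qed
    have b1: "- (nrm g * nrm (\<lambda>Q. U Q - S N Q)) \<le> ip g U - ip g (S N)" for N
      using b[of N] by (simp add: abs_le_iff)
    have b2: "ip g U - ip g (S N) \<le> nrm g * nrm (\<lambda>Q. U Q - S N Q)" for N
      using b[of N] by (simp add: abs_le_iff)
    show "\<forall>\<^sub>F N in sequentially. - (nrm g * nrm (\<lambda>Q. U Q - S N Q)) \<le> ip g U - ip g (S N)"
      using b1 by (intro always_eventually allI) 
    show "\<forall>\<^sub>F N in sequentially. ip g U - ip g (S N) \<le> nrm g * nrm (\<lambda>Q. U Q - S N Q)"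
      using b2 by (intro always_eventually allI)
    show "(\<lambda>N. - (nrm g * nrm (\<lambda>Q. U Q - S N Q))) \<longlonglongrightarrow> 0"
      using tendsto_mult[OF tendsto_const U(2)] tendsto_minus by fastforce
    show "(\<lambda>N. nrm g * nrm (\<lambda>Q. U Q - S N Q)) \<longlonglongrightarrow> 0"
      using tendsto_mult[OF tendsto_const U(2)] by simp
  qed
  then have "(\<lambda>N. ip g U - (ip g U - ip g (S N))) \<longlonglongrightarrow> ip g U - 0"
    by (intro tendsto_diff tendsto_const)
  then have "(\<lambda>N. ip g (S N)) \<longlonglongrightarrow> ip g U" by simp
  then show ?thesis unfolding ipS U_def .
qed

end

definition mn :: "real mat \<Rightarrow> real" where
  "mn A = (\<Sum>i<dim_row A. \<Sum>j<dim_col A. \<bar>A $$ (i, j)\<bar>)"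

lemma mn_nonneg: "mn A \<ge> 0"
  unfolding mn_def by (intro sum_nonneg) auto

lemma mn_row: assumes "i < dim_row A" shows "(\<Sum>j<dim_col A. \<bar>A $$ (i, j)\<bar>) \<le> mn A"
  unfolding mn_def using assms
  by (intro member_le_sum[of i "{..<dim_row A}" "\<lambda>i. \<Sum>j<dim_col A. \<bar>A $$ (i, j)\<bar>"]) (auto intro: sum_nonneg)

lemma mn_add: assumes A: "A \<in> carrier_mat n m" and B: "B \<in> carrier_mat n m"
  shows "mn (A + B) \<le> mn A + mn B"
proof -
  have "mn (A + B) = (\<Sum>i<n. \<Sum>j<m. \<bar>A $$ (i, j) + B $$ (i, j)\<bar>)"
    unfolding mn_def using A B by (intro sum.cong refl) auto
  also have "\<dots> \<le> (\<Sum>i<n. \<Sum>j<m. \<bar>A $$ (i, j)\<bar> + \<bar>B $$ (i, j)\<bar>)"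
    by (intro sum_mono abs_triangle_ineq)
  also have "\<dots> = mn A + mn B" unfolding mn_def using A B by (simp add: sum.distrib)
  finally show ?thesis .
qed

lemma mn_minus: assumes A: "A \<in> carrier_mat n m" and B: "B \<in> carrier_mat n m"
  shows "mn (A - B) \<le> mn A + mn B"
proof -
  have "mn (A - B) = (\<Sum>i<n. \<Sum>j<m. \<bar>A $$ (i, j) - B $$ (i, j)\<bar>)"
    unfolding mn_def using A B by (intro sum.cong refl) auto
  also have "\<dots> \<le> (\<Sum>i<n. \<Sum>j<m. \<bar>A $$ (i, j)\<bar> + \<bar>B $$ (i, j)\<bar>)"
    by (intro sum_mono abs_triangle_ineq4)
  also have "\<dots> = mn A + mn B" unfolding mn_def using A B by (simp add: sum.distrib)
  finally show ?thesis .
qed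

lemma mn_mult: assumes A: "A \<in> carrier_mat n m" and B: "B \<in> carrier_mat m p"
  shows "mn (A * B) \<le> mn A * mn B"
proof -
  have "mn (A * B) = (\<Sum>i<n. \<Sum>j<p. \<bar>\<Sum>k<m. A $$ (i, k) * B $$ (k, j)\<bar>)"
    unfolding mn_def using A B
    by (intro sum.cong refl) (auto simp: scalar_prod_def atLeast0LessThan intro!: sum.cong)
  also have "\<dots> \<le> (\<Sum>i<n. \<Sum>j<p. \<Sum>k<m. \<bar>A $$ (i, k)\<bar> * \<bar>B $$ (k, j)\<bar>)"
    by (intro sum_mono) (auto simp: abs_mult[symmetric] intro: sum_abs[THEN order_trans])
  also have "\<dots> = (\<Sum>i<n. \<Sum>k<m. \<bar>A $$ (i, k)\<bar> * (\<Sum>j<p. \<bar>B $$ (k, j)\<bar>))"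
    by (rule sum.cong[OF refl]) (subst sum.swap, simp add: sum_distrib_left)
  also have "\<dots> \<le> (\<Sum>i<n. \<Sum>k<m. \<bar>A $$ (i, k)\<bar> * mn B)"
  proof (intro sum_mono mult_left_mono)
    fix k assume "k \<in> {..<m}"
    then show "(\<Sum>j<p. \<bar>B $$ (k, j)\<bar>) \<le> mn B" using mn_row[of k B] B by auto
  qed auto
  also have "\<dots> = mn A * mn B" unfolding mn_def using A by (simp add: sum_distrib_right)
  finally show ?thesis .
qed

lemma mn_bound: assumes A: "A \<in> carrier_mat n m" and b: "\<And>i j. i < n \<Longrightarrow> j < m \<Longrightarrow> \<bar>A $$ (i, j)\<bar> \<le> b"
  shows "mn A \<le> real n * real m * b"
proof -
  have "(\<Sum>i<n. \<Sum>j<m. \<bar>A $$ (i, j)\<bar>) \<le> (\<Sum>i<n. \<Sum>j<m. b)" by (intro sum_mono b) auto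
  then show ?thesis unfolding mn_def using A by simp
qed

lemma sum_sq_le: "finite I \<Longrightarrow> (\<And>i. i \<in> I \<Longrightarrow> f i \<ge> (0::real)) \<Longrightarrow> (\<Sum>i\<in>I. (f i)^2) \<le> (\<Sum>i\<in>I. f i)^2"
proof -
  assume fin: "finite I" and nn: "\<And>i. i \<in> I \<Longrightarrow> f i \<ge> 0"
  have "(\<Sum>i\<in>I. (f i)^2) \<le> (\<Sum>i\<in>I. f i * (\<Sum>i\<in>I. f i))"
  proof (intro sum_mono)
    fix i assume i: "i \<in> I"
    have "f i \<le> (\<Sum>i\<in>I. f i)" using fin i nn by (intro member_le_sum) auto
    then show "(f i)^2 \<le> f i * (\<Sum>i\<in>I. f i)" using nn[OF i] by (simp add: power2_eq_square mult_left_mono)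
  qed
  also have "\<dots> = (\<Sum>i\<in>I. f i)^2" by (simp add: power2_eq_square sum_distrib_right)
  finally show ?thesis .
qed

lemma fro_le_mn: "fro_norm A \<le> mn A"
proof -
  have "(\<Sum>i<dim_row A. \<Sum>j<dim_col A. (A $$ (i, j))^2) \<le> (\<Sum>i<dim_row A. (\<Sum>j<dim_col A. \<bar>A $$ (i, j)\<bar>)^2)"
  proof (intro sum_mono)
    fix i
    have "(\<Sum>j<dim_col A. \<bar>A $$ (i, j)\<bar>^2) \<le> (\<Sum>j<dim_col A. \<bar>A $$ (i, j)\<bar>)^2" by (rule sum_sq_le) auto
    then show "(\<Sum>j<dim_col A. (A $$ (i, j))^2) \<le> (\<Sum>j<dim_col A. \<bar>A $$ (i, j)\<bar>)^2" by simp
  qed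
  also have "\<dots> \<le> (mn A)^2" unfolding mn_def by (rule sum_sq_le) (auto intro: sum_nonneg)
  finally have "sqrt (\<Sum>i<dim_row A. \<Sum>j<dim_col A. (A $$ (i, j))^2) \<le> sqrt ((mn A)^2)" by (rule real_sqrt_le_mono)
  then show ?thesis unfolding fro_norm_def using mn_nonneg[of A] by simp
qed

lemma minv_props: assumes A: "A \<in> carrier_mat n n" and d: "Determinant.det A \<noteq> 0"
  shows "minv A \<in> carrier_mat n n \<and> A * minv A = 1\<^sub>m n \<and> minv A * A = 1\<^sub>m n"
proof (cases "mat_inverse A")
  case None
  have "A \<in> Units (ring_mat TYPE(real) n ())" by (rule det_non_zero_imp_unit[OF A d])
  moreover have "A \<notin> Units (ring_mat TYPE(real) n ())" by (rule mat_inverse(1)[OF A None])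
  ultimately show ?thesis by blast
next
  case (Some B)
  then show ?thesis unfolding minv_def using mat_inverse(2)[OF A Some] by auto
qed

lemma det_ne_of_inv: assumes A: "A \<in> carrier_mat n n" and inv: "invertible_mat (A :: real mat)"
  shows "Determinant.det A \<noteq> 0"
proof -
  obtain B where B1: "A * B = 1\<^sub>m (dim_row A)" and B2: "B * A = 1\<^sub>m (dim_row B)"
    using inv unfolding invertible_mat_def inverts_mat_def by blast
  have "dim_col (A * B) = n" using B1 A by simp
  then have cB: "dim_col B = n" by simp
  have "dim_row (B * A) = dim_col (B * A)" using B2 by simp
  then have rB: "dim_row B = n" using A by simp
  have Bc: "B \<in> carrier_mat n n" using cB rB by auto
  have "Determinant.det A * Determinant.det B = Determinant.det (A * B)" by (rule det_mult[OF A Bc, symmetric])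
  also have "\<dots> = 1" using B1 A by simp
  finally show ?thesis by auto
qed

lemma invertible_of: assumes "A \<in> carrier_mat n n" "B \<in> carrier_mat n n" "A * B = 1\<^sub>m n" "B * A = (1\<^sub>m n :: real mat)"
  shows "invertible_mat A"
  unfolding invertible_mat_def inverts_mat_def using assms by auto

lemma det_pert: assumes A: "A \<in> carrier_mat n n" and X: "X \<in> carrier_mat n n" and Ai: "Ai \<in> carrier_mat n n"
  and AiA: "Ai * A = 1\<^sub>m n" and small: "mn Ai * mn X < 1"
  shows "Determinant.det (A + X) \<noteq> 0"
proof
  assume "Determinant.det (A + X) = 0"
  then obtain v where v: "v \<in> carrier_vec n" "v \<noteq> 0\<^sub>v n" "(A + X) *\<^sub>v v = 0\<^sub>v n"
    using det_0_iff_vec_prod_zero_field[of "A + X" n] A X by auto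
  define Y where "Y = Ai * X"
  have Yc: "Y \<in> carrier_mat n n" unfolding Y_def using Ai X by auto
  have "0\<^sub>v n = Ai *\<^sub>v ((A + X) *\<^sub>v v)"
    using v(3) Ai by (intro eq_vecI) (auto simp: scalar_prod_def)
  also have "\<dots> = (Ai * (A + X)) *\<^sub>v v" using Ai A X v by (subst assoc_mult_mat_vec) auto
  also have "Ai * (A + X) = 1\<^sub>m n + Y" unfolding Y_def using Ai A X AiA by (subst mult_add_distrib_mat) auto
  also have "(1\<^sub>m n + Y) *\<^sub>v v = v + Y *\<^sub>v v" using Yc v by (subst add_mult_distrib_mat_vec) auto
  finally have eq0: "v + Y *\<^sub>v v = 0\<^sub>v n" by simp
  have n0: "n > 0"
  proof (rule ccontr)
    assume "\<not> n > 0"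
    then have "v = 0\<^sub>v n" using v(1) by (intro eq_vecI) auto
    then show False using v(2) by simp
  qed
  define M where "M = Max ((\<lambda>k. \<bar>v $ k\<bar>) ` {..<n})"
  have Mge: "\<bar>v $ k\<bar> \<le> M" if "k < n" for k unfolding M_def using that by (intro Max_ge) auto
  have "M \<in> (\<lambda>k. \<bar>v $ k\<bar>) ` {..<n}" unfolding M_def using n0 by (intro Max_in) auto
  then obtain i0 where i0: "i0 < n" "\<bar>v $ i0\<bar> = M" by auto
  have "v $ i0 + (Y *\<^sub>v v) $ i0 = 0"
    using arg_cong[OF eq0, of "\<lambda>x. x $ i0"] i0 v Yc by simp
  then have "M = \<bar>(Y *\<^sub>v v) $ i0\<bar>" using i0 by simp
  also have "(Y *\<^sub>v v) $ i0 = (\<Sum>k<n. Y $$ (i0, k) * v $ k)"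
    using i0 Yc v by (auto simp: scalar_prod_def atLeast0LessThan intro!: sum.cong)
  also have "\<bar>\<dots>\<bar> \<le> (\<Sum>k<n. \<bar>Y $$ (i0, k)\<bar> * M)"
    by (rule order_trans[OF sum_abs]) (auto simp: abs_mult intro!: sum_mono mult_left_mono Mge)
  also have "\<dots> = (\<Sum>k<n. \<bar>Y $$ (i0, k)\<bar>) * M" by (simp add: sum_distrib_right)
  also have "\<dots> \<le> mn Y * M"
    using mn_row[of i0 Y] Yc i0 Mge[OF i0(1)] by (intro mult_right_mono) auto
  also have "\<dots> \<le> (mn Ai * mn X) * M"
    using mn_mult[OF Ai X] Mge[OF i0(1)] unfolding Y_def by (intro mult_right_mono) auto
  finally have "M \<le> (mn Ai * mn X) * M" .
  then have "(1 - mn Ai * mn X) * M \<le> 0" by (simp add: algebra_simps)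
  then have "M \<le> 0" using small by (auto simp: mult_le_0_iff)
  then have "v = 0\<^sub>v n" using v(1) Mge by (intro eq_vecI) (auto, metis abs_le_zero_iff order_trans)
  then show False using v(2) by simp
qed

lemma sq_mult[simp]: "A \<in> carrier_mat n n \<Longrightarrow> B \<in> carrier_mat n n \<Longrightarrow> A * B \<in> carrier_mat n n"
  by (rule mult_carrier_mat)
lemma sq_add[simp]: "A \<in> carrier_mat n n \<Longrightarrow> B \<in> carrier_mat n n \<Longrightarrow> A + B \<in> carrier_mat n n"
  by (rule add_carrier_mat)
lemma sq_minus[simp]: "A \<in> carrier_mat n n \<Longrightarrow> B \<in> carrier_mat n n \<Longrightarrow> A - B \<in> carrier_mat n n"
  by (rule minus_carrier_mat)

lemma E_carrier[simp]: "exp_diag d lam t \<in> carrier_mat d d"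
  unfolding exp_diag_def by simp

lemma E_dims[simp]: "dim_row (exp_diag d lam t) = d" "dim_col (exp_diag d lam t) = d"
  unfolding exp_diag_def by simp_all

lemma E_idx: "i < d \<Longrightarrow> j < d \<Longrightarrow> exp_diag d lam t $$ (i, j) = (if i = j then exp (lam (i+1) * t) else 0)"
  unfolding exp_diag_def by simp

lemma E_mult: "exp_diag d lam t * exp_diag d lam s = exp_diag d lam (t + s)"
proof (rule eq_matI)
  fix i j assume i: "i < dim_row (exp_diag d lam (t + s))" and j: "j < dim_col (exp_diag d lam (t + s))"
  then have i: "i < d" and j: "j < d" unfolding exp_diag_def by auto
  have "(exp_diag d lam t * exp_diag d lam s) $$ (i, j)
      = (\<Sum>k\<in>{0..<d}. exp_diag d lam t $$ (i, k) * exp_diag d lam s $$ (k, j))"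
    using i j by (simp add: scalar_prod_def)
  also have "\<dots> = (\<Sum>k\<in>{0..<d}. if k = i then (if i = j then exp (lam (i+1) * t) * exp (lam (i+1) * s) else 0) else 0)"
    using i j by (intro sum.cong refl) (auto simp: E_idx)
  also have "\<dots> = (if i = j then exp (lam (i+1) * t) * exp (lam (i+1) * s) else 0)"
    using i by (simp add: sum.delta)
  also have "\<dots> = exp_diag d lam (t + s) $$ (i, j)"
    using i j by (simp add: E_idx distrib_left exp_add)
  finally show "(exp_diag d lam t * exp_diag d lam s) $$ (i, j) = exp_diag d lam (t + s) $$ (i, j)" .
qed (auto simp: exp_diag_def)

lemma E_zero: "exp_diag d lam 0 = 1\<^sub>m d"
  by (rule eq_matI) (auto simp: exp_diag_def)

lemma E_inv: "exp_diag d lam (- t) * exp_diag d lam t = 1\<^sub>m d"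
  by (simp add: E_mult E_zero)

lemma E_inv': "exp_diag d lam t * exp_diag d lam (- t) = 1\<^sub>m d"
  by (simp add: E_mult E_zero)

lemma cancel_left: "A \<in> carrier_mat n n \<Longrightarrow> B \<in> carrier_mat n n \<Longrightarrow> B * A = 1\<^sub>m n \<Longrightarrow> X \<in> carrier_mat n m
  \<Longrightarrow> B * (A * X) = (X :: real mat)"
  by (subst assoc_mult_mat[symmetric, of B n n A n X m]) auto

lemma add_minus_cancel_mat: "X \<in> carrier_mat n m \<Longrightarrow> Y \<in> carrier_mat n m \<Longrightarrow> Z \<in> carrier_mat n m \<Longrightarrow>
  (X + Y) - (X + Z) = Y - (Z :: real mat)"
  by (rule eq_matI) auto

lemma add_minus_cancel_mat2: "X \<in> carrier_mat n m \<Longrightarrow> Y \<in> carrier_mat n m \<Longrightarrow>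
  (Y + X) - X = (Y :: real mat)"
  by (rule eq_matI) auto

lemma add_minus_cancel_mat3: "X \<in> carrier_mat n m \<Longrightarrow> Y \<in> carrier_mat n m \<Longrightarrow>
  X + (Y - X) = (Y :: real mat)"
  by (rule eq_matI) auto

theorem mainTheorem2:
  fixes d :: nat and mu nu :: real
    and phi :: "nat \<Rightarrow> real \<Rightarrow> real" and lam :: "nat \<Rightarrow> real"
    and rho :: "nat \<Rightarrow> real \<Rightarrow> real" and \<delta> :: real
  assumes d: "d \<ge> 1"
    and lam1: "lam 1 = 0"
    and lam_dec: "\<And>i. i \<ge> 1 \<Longrightarrow> lam (Suc i) < lam i"
    and eig_H2: "\<And>i. i \<ge> 1 \<Longrightarrow> H2_1 mu nu (phi i)"
    and eig_eq: "\<And>i Q. i \<ge> 1 \<Longrightarrow> FP_op mu nu (phi i) Q = lam i * phi i Q"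
    and orthonormal: "\<And>i j. i \<ge> 1 \<Longrightarrow> j \<ge> 1 \<Longrightarrow>
        ip1 mu nu (phi i) (phi j) = (if i = j then 1 else 0)"
    and complete: "\<And>u. L2_1 mu nu u \<Longrightarrow>
        (\<lambda>N. norm1 mu nu (\<lambda>Q. u Q - (\<Sum>i\<in>{1..N}. ip1 mu nu (phi i) u * phi i Q))) \<longlonglongrightarrow> 0"
    and rho_L2: "\<And>j. j \<in> {1..d} \<Longrightarrow> L2_1 mu nu (rho j)"
    and rho_mass: "\<And>j. j \<in> {1..d} \<Longrightarrow> (LINT Q|lborel. rho j Q) = 1"
    and T_inv: "invertible_mat (T_lin d mu nu phi rho)"
    and R_inv: "invertible_mat (R_mat d phi)"
    and \<delta>: "\<delta> \<ge> 0"
  shows "\<exists>t0 \<ge> 0. \<exists>C > 0. \<forall>ts > t0.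
           invertible_mat (P_lin d mu nu phi lam rho ts) \<and>
           fro_norm (Phi_star d mu nu phi lam rho \<delta> - Phi_skip d mu nu phi lam rho ts \<delta>)
             \<le> C * exp ((lam (d + 1) - lam d) * ts)"
proof -
  define Z where "Z = (LINT q|lborel. exp (- 2 * V mu nu q))"
  have Znn: "Z \<ge> 0" unfolding Z_def by (intro integral_nonneg_AE AE_I2) simp
  have Zne: "Z \<noteq> 0"
  proof
    assume Z0: "Z = 0"
    have "phi1 mu nu Q = 0" for Q unfolding phi1_def Z_def[symmetric] Z0 by simp
    then have "ip1 mu nu (phi 1) (phi 1) = 0" unfolding ip1_def by simp
    then show False using orthonormal[of 1 1] by simp
  qed
  have wpos: "\<And>Q. phi1 mu nu Q > 0" unfolding phi1_def Z_def[symmetric] using Znn Zne by simp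
  interpret ON mu nu phi
    by unfold_locales (use wpos eig_H2 orthonormal in \<open>auto simp: H2_1_def\<close>)
  have lam_anti: "lam j \<le> lam i" if "1 \<le> i" "i \<le> j" for i j
    using that(2)
  proof (induction j rule: dec_induct)
    case base then show ?case by simp
  next
    case (step n)
    then show ?case using lam_dec[of n] that(1) by fastforce
  qed
  have lamneg: "lam i \<le> 0" if "i \<ge> 1" for i using lam_anti[of 1 i] that lam1 by simp
  have gap: "lam (d+1) < lam d" using lam_dec[of d] d by simp
  define g where "g k = (\<lambda>Q. Q^k * phi1 mu nu Q)" for k
  have gL: "L2_1 mu nu (g k)" for k unfolding g_def by (rule gk_L2)
  define cc where "cc i j = ip1 mu nu (phi i) (rho j)" for i j
  define mm where "mm k i = ip1 mu nu (g k) (phi i)" for k i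
  define T where "T = T_lin d mu nu phi rho"
  define R where "R = R_mat d phi"
  define E where "E t = exp_diag d lam t" for t
  define P where "P t = P_lin d mu nu phi lam rho t" for t
  have Tc[simp]: "T \<in> carrier_mat d d" unfolding T_def T_lin_def by simp
  have Rc[simp]: "R \<in> carrier_mat d d" unfolding R_def R_mat_def by simp
  have Ec[simp]: "E t \<in> carrier_mat d d" for t unfolding E_def by simp
  have Pc[simp]: "P t \<in> carrier_mat d d" for t unfolding P_def P_lin_def by simp
  have dims[simp]: "dim_row R = d" "dim_col R = d" "dim_row T = d" "dim_col T = d"
    "dim_row (E t) = d" "dim_col (E t) = d" "dim_row (P t) = d" "dim_col (P t) = d" for t
    using carrier_matD[OF Rc] carrier_matD[OF Tc] carrier_matD[OF Ec[of t]] carrier_matD[OF Pc[of t]] by auto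
  have P_entry: "P t $$ (k, j) = ip1 mu nu (g k) (semigroup mu nu phi lam t (rho (j+1)))" if "k < d" "j < d" for t k j
    unfolding P_def P_lin_def g_def using that by (simp add: ip_gk)
  have R_entry: "R $$ (k, l) = mm k (l+1)" if "k < d" "l < d" for k l
    unfolding R_def R_mat_def mm_def g_def using that by (simp add: ip_gk)
  have T_entry: "T $$ (l, j) = cc (l+1) (j+1)" if "l < d" "j < d" for l j
    unfolding T_def T_lin_def cc_def using that by simp
  have RE_entry: "(R * E t) $$ (k, l) = mm k (l+1) * exp (lam (l+1) * t)" if "k < d" "l < d" for t k l
  proof -
    have "(R * E t) $$ (k, l) = (\<Sum>i\<in>{0..<d}. R $$ (k, i) * E t $$ (i, l))"
      using that by (simp add: scalar_prod_def)
    also have "\<dots> = (\<Sum>i\<in>{0..<d}. if i = l then mm k (l+1) * exp (lam (l+1) * t) else 0)"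
      using that by (intro sum.cong refl) (auto simp: E_def E_idx R_entry)
    also have "\<dots> = mm k (l+1) * exp (lam (l+1) * t)" using that by (simp add: sum.delta')
    finally show ?thesis .
  qed
  have RET_entry: "(R * E t * T) $$ (k, j) = (\<Sum>i\<in>{1..d}. exp (lam i * t) * cc i (j+1) * mm k i)"
    if "k < d" "j < d" for t k j
  proof -
    have "(R * E t * T) $$ (k, j) = (\<Sum>l\<in>{0..<d}. (R * E t) $$ (k, l) * T $$ (l, j))"
      using that by (simp add: scalar_prod_def)
    also have "\<dots> = (\<Sum>l<d. exp (lam (Suc l) * t) * cc (Suc l) (j+1) * mm k (Suc l))"
      using that by (auto simp: RE_entry T_entry atLeast0LessThan simp del: index_mult_mat intro!: sum.cong)
    also have "\<dots> = (\<Sum>i\<in>{1..d}. exp (lam i * t) * cc i (j+1) * mm k i)"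
      by (simp add: sum.atLeast1_atMost_eq)
    finally show ?thesis .
  qed
  define K where "K = (\<Sum>j\<in>{1..d}. ip1 mu nu (rho j) (rho j)) + (\<Sum>k<d. ip1 mu nu (g k) (g k))"
  have K0: "K \<ge> 0" unfolding K_def by (intro add_nonneg_nonneg sum_nonneg ip_nonneg)
  have Dbound: "\<bar>P t $$ (k, j) - (R * E t * T) $$ (k, j)\<bar> \<le> K * exp (lam (d+1) * t)"
    if t: "t \<ge> 0" and kj: "k < d" "j < d" for t k j
  proof -
    have rL: "L2_1 mu nu (rho (j+1))" using rho_L2 kj by auto
    define a where "a i = exp (lam i * t) * cc i (j+1) * mm k i" for i
    have lim: "(\<lambda>N. \<Sum>i\<in>{1..N}. a i) \<longlonglongrightarrow> P t $$ (k, j)"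
      using moment_limit[OF rL lamneg t gL[of k]] unfolding a_def cc_def mm_def P_entry[OF kj] .
    have A: "(R * E t * T) $$ (k, j) = (\<Sum>i\<in>{1..d}. a i)" unfolding a_def by (rule RET_entry[OF kj])
    have Kb: "(ip1 mu nu (rho (j+1)) (rho (j+1)) + ip1 mu nu (g k) (g k)) / 2 \<le> K"
    proof -
      have f1: "ip1 mu nu (rho (j+1)) (rho (j+1)) \<le> (\<Sum>j\<in>{1..d}. ip1 mu nu (rho j) (rho j))"
        using kj by (intro member_le_sum ip_nonneg) auto
      have f2: "ip1 mu nu (g k) (g k) \<le> (\<Sum>k<d. ip1 mu nu (g k) (g k))"
        using kj by (intro member_le_sum ip_nonneg) auto
      have s1: "(ip1 mu nu (rho (j+1)) (rho (j+1)) + ip1 mu nu (g k) (g k)) / 2 \<le> ip1 mu nu (rho (j+1)) (rho (j+1)) + ip1 mu nu (g k) (g k)"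
        using ip_nonneg[of "rho (j+1)"] ip_nonneg[of "g k"] by simp
      show ?thesis unfolding K_def using order_trans[OF s1 add_mono[OF f1 f2]] .
    qed
    have bnd: "\<bar>(\<Sum>i\<in>{1..N}. a i) - (R * E t * T) $$ (k, j)\<bar> \<le> K * exp (lam (d+1) * t)" if N: "N \<ge> d" for N
    proof -
      have "{1..N} = {1..d} \<union> {d<..N}" using N by auto
      then have "(\<Sum>i\<in>{1..N}. a i) = (\<Sum>i\<in>{1..d}. a i) + (\<Sum>i\<in>{d<..N}. a i)"
        by (simp add: sum.union_disjoint ivl_disj_int)
      then have "\<bar>(\<Sum>i\<in>{1..N}. a i) - (R * E t * T) $$ (k, j)\<bar> = \<bar>\<Sum>i\<in>{d<..N}. a i\<bar>" unfolding A by simp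
      also have "\<dots> \<le> (\<Sum>i\<in>{d<..N}. \<bar>a i\<bar>)" by (rule sum_abs)
      also have "\<dots> \<le> (\<Sum>i\<in>{d<..N}. exp (lam (d+1) * t) * (((cc i (j+1))^2 + (mm k i)^2) / 2))"
      proof (rule sum_mono)
        fix i assume i: "i \<in> {d<..N}"
        have e: "exp (lam i * t) \<le> exp (lam (d+1) * t)"
          using lam_anti[of "d+1" i] i t by (auto intro: mult_right_mono)
        have cm: "\<bar>cc i (j+1) * mm k i\<bar> \<le> ((cc i (j+1))^2 + (mm k i)^2) / 2"
          using sum_squares_bound[of "\<bar>cc i (j+1)\<bar>" "\<bar>mm k i\<bar>"] by (simp add: abs_mult)
        have "\<bar>a i\<bar> = exp (lam i * t) * \<bar>cc i (j+1) * mm k i\<bar>" unfolding a_def by (simp add: abs_mult)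
        also have "\<dots> \<le> exp (lam (d+1) * t) * (((cc i (j+1))^2 + (mm k i)^2) / 2)"
          using e cm by (intro mult_mono) auto
        finally show "\<bar>a i\<bar> \<le> exp (lam (d+1) * t) * (((cc i (j+1))^2 + (mm k i)^2) / 2)" .
      qed
      also have "\<dots> = exp (lam (d+1) * t) * (\<Sum>i\<in>{d<..N}. ((cc i (j+1))^2 + (mm k i)^2) / 2)"
        by (simp add: sum_distrib_left)
      also have "\<dots> \<le> exp (lam (d+1) * t) * (\<Sum>i\<in>{1..N}. ((cc i (j+1))^2 + (mm k i)^2) / 2)"
        by (intro mult_left_mono sum_mono2) auto
      also have "(\<Sum>i\<in>{1..N}. ((cc i (j+1))^2 + (mm k i)^2) / 2)
          = ((\<Sum>i\<in>{1..N}. (ip1 mu nu (phi i) (rho (j+1)))^2) + (\<Sum>i\<in>{1..N}. (ip1 mu nu (phi i) (g k))^2)) / 2"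
        unfolding cc_def mm_def by (simp only: ip_sym[of "g k"] sum_divide_distrib[symmetric] sum.distrib)
      also have "\<dots> \<le> (ip1 mu nu (rho (j+1)) (rho (j+1)) + ip1 mu nu (g k) (g k)) / 2"
        using bessel[OF rL, of N] bessel[OF gL[of k], of N] by simp
      also have "\<dots> \<le> K" by (rule Kb)
      finally show ?thesis by (simp add: mult.commute)
    qed
    have "(\<lambda>N. \<bar>(\<Sum>i\<in>{1..N}. a i) - (R * E t * T) $$ (k, j)\<bar>) \<longlonglongrightarrow> \<bar>P t $$ (k, j) - (R * E t * T) $$ (k, j)\<bar>"
      by (intro tendsto_intros lim)
    then show ?thesis by (rule LIMSEQ_le_const2) (use bnd in blast)
  qed
  have detT: "Determinant.det T \<noteq> 0" using det_ne_of_inv[OF Tc] T_inv unfolding T_def by simp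
  have detR: "Determinant.det R \<noteq> 0" using det_ne_of_inv[OF Rc] R_inv unfolding R_def by simp
  define Ti where "Ti = minv T"
  define Ri where "Ri = minv R"
  have Ti: "Ti \<in> carrier_mat d d" "T * Ti = 1\<^sub>m d" "Ti * T = 1\<^sub>m d"
    using minv_props[OF Tc detT] unfolding Ti_def by auto
  have Ri: "Ri \<in> carrier_mat d d" "R * Ri = 1\<^sub>m d" "Ri * R = 1\<^sub>m d"
    using minv_props[OF Rc detR] unfolding Ri_def by auto
  have Tic[simp]: "Ti \<in> carrier_mat d d" and Ric[simp]: "Ri \<in> carrier_mat d d" using Ti Ri by auto
  have Einv: "E (- t) * E t = 1\<^sub>m d" "E t * E (- t) = 1\<^sub>m d" for t unfolding E_def by (simp_all add: E_inv E_inv')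
  define Dl where "Dl t = P t - R * E t * T" for t
  have Tid[simp]: "dim_row Ti = d" "dim_col Ti = d" "dim_row Ri = d" "dim_col Ri = d"
    using carrier_matD[OF Tic] carrier_matD[OF Ric] by auto
  have assocd[simp]: "A \<in> carrier_mat d d \<Longrightarrow> B \<in> carrier_mat d d \<Longrightarrow> C \<in> carrier_mat d d \<Longrightarrow> A * B * C = A * (B * C)"
    for A B C :: "real mat" by (rule assoc_mult_mat)
  have Dlc[simp]: "Dl t \<in> carrier_mat d d" for t unfolding Dl_def by simp
  have mnDl: "mn (Dl t) \<le> real d * real d * (K * exp (lam (d+1) * t))" if t: "t \<ge> 0" for t
  proof (rule mn_bound[OF Dlc])
    fix i j assume ij: "i < d" "j < d"
    have "Dl t $$ (i, j) = P t $$ (i, j) - (R * E t * T) $$ (i, j)"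
      unfolding Dl_def by (rule index_minus_mat(1)) (use ij in auto)
    then show "\<bar>Dl t $$ (i, j)\<bar> \<le> K * exp (lam (d+1) * t)" using Dbound[OF t ij] by simp
  qed
  have mnEneg: "mn (E (- t)) \<le> real d * real d * exp (- lam d * t)" if t: "t \<ge> 0" for t
  proof (rule mn_bound[OF Ec])
    fix i j assume ij: "i < d" "j < d"
    have "lam d \<le> lam (i+1)" using lam_anti[of "i+1" d] ij by auto
    then have "lam d * t \<le> lam (i+1) * t" using t by (rule mult_right_mono)
    then have "exp (lam (i+1) * (- t)) \<le> exp (- lam d * t)" by simp
    then show "\<bar>E (- t) $$ (i, j)\<bar> \<le> exp (- lam d * t)" using ij by (auto simp: E_def E_idx)
  qed
  define F where "F t = E (- t) * (Ri * Dl t)" for t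
  have Fc[simp]: "F t \<in> carrier_mat d d" for t unfolding F_def by simp
  define eps where "eps t = exp ((lam (d+1) - lam d) * t)" for t
  define K1 where "K1 = (real d * real d) * (mn Ri * (real d * real d * K))"
  have K1nn: "K1 \<ge> 0" unfolding K1_def using K0 mn_nonneg[of Ri] by simp
  have mnF: "mn (F t) \<le> K1 * eps t" if t: "t \<ge> 0" for t
  proof -
    have "mn (F t) \<le> mn (E (- t)) * mn (Ri * Dl t)"
      unfolding F_def by (rule mn_mult[OF Ec mult_carrier_mat[OF Ric Dlc]])
    also have "\<dots> \<le> mn (E (- t)) * (mn Ri * mn (Dl t))"
      by (intro mult_left_mono mn_mult[OF Ric Dlc] mn_nonneg)
    also have "\<dots> \<le> (real d * real d * exp (- lam d * t)) * (mn Ri * (real d * real d * (K * exp (lam (d+1) * t))))"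
      by (intro mult_mono mnEneg[OF t] mnDl[OF t] order_refl mult_nonneg_nonneg mn_nonneg) (use K0 in auto)
    also have "\<dots> = K1 * (exp (- lam d * t) * exp (lam (d+1) * t))"
      unfolding K1_def by (simp add: algebra_simps)
    also have "exp (- lam d * t) * exp (lam (d+1) * t) = eps t"
      unfolding eps_def by (subst exp_add[symmetric]) (simp add: algebra_simps)
    finally show ?thesis .
  qed
  have PF: "P t = R * (E t * (T + F t))" for t
  proof -
    have "E t * (T + F t) = E t * T + E t * F t" by (rule mult_add_distrib_mat[OF Ec Tc Fc])
    moreover have "E t * F t = Ri * Dl t" unfolding F_def
      by (rule cancel_left[where n=d and m=d]) (auto simp: Einv)
    ultimately have "R * (E t * (T + F t)) = R * (E t * T) + R * (Ri * Dl t)"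
      by (simp add: mult_add_distrib_mat[OF Rc, of "E t * T" d "Ri * Dl t"])
    also have "R * (Ri * Dl t) = Dl t" by (rule cancel_left[where n=d and m=d]) (auto simp: Ri)
    also have "R * (E t * T) = R * E t * T" by simp
    also have "R * E t * T + Dl t = P t" unfolding Dl_def by (rule add_minus_cancel_mat3[where n=d and m=d]) auto
    finally show ?thesis by simp
  qed
  define M where "M = mn Ti * K1"
  have M0: "M \<ge> 0" unfolding M_def using K1nn mn_nonneg[of Ti] by simp
  define t0 where "t0 = ln (2*M+1) / (lam d - lam (d+1))"
  have t00: "t0 \<ge> 0" unfolding t0_def using gap M0 by (intro divide_nonneg_pos ln_ge_zero) auto
  define C1 where "C1 = mn Ti * (K1 * (2 * mn Ti * (mn (E \<delta>) * mn T))) + 2 * mn Ti * (mn (E \<delta>) * K1)"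
  have C10: "C1 \<ge> 0" unfolding C1_def using K1nn mn_nonneg[of Ti] mn_nonneg[of "E \<delta>"] mn_nonneg[of T] by simp
  have main: "invertible_mat (P ts) \<and>
      fro_norm (Phi_star d mu nu phi lam rho \<delta> - Phi_skip d mu nu phi lam rho ts \<delta>) \<le> (C1 + 1) * eps ts"
    if ts: "ts > t0" for ts
  proof -
    have tpos: "ts \<ge> 0" using ts t00 by linarith
    have td: "ts + \<delta> \<ge> 0" using tpos \<delta> by linarith
    have epsmono: "eps (ts + \<delta>) \<le> eps ts"
      unfolding eps_def using gap \<delta> by (simp add: mult_left_mono_neg)
    have epsb: "eps ts \<le> 1 / (2*M+1)"
    proof -
      have "(lam d - lam (d+1)) * t0 = ln (2*M+1)" unfolding t0_def using gap by simp
      moreover have "(lam d - lam (d+1)) * t0 \<le> (lam d - lam (d+1)) * ts"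
        using ts gap by (intro mult_left_mono) auto
      ultimately have "(lam (d+1) - lam d) * ts \<le> - ln (2*M+1)" by (simp add: algebra_simps)
      then have "eps ts \<le> exp (- ln (2*M+1))" unfolding eps_def by simp
      also have "\<dots> = 1 / (2*M+1)" using M0 by (simp add: exp_minus inverse_eq_divide)
      finally show ?thesis .
    qed
    have eps0: "eps ts \<ge> 0" unfolding eps_def by simp
    have small: "mn Ti * mn (F ts) \<le> 1/2"
    proof -
      have "mn Ti * mn (F ts) \<le> mn Ti * (K1 * eps ts)" by (intro mult_left_mono mnF tpos mn_nonneg)
      also have "\<dots> = M * eps ts" unfolding M_def by simp
      also have "\<dots> \<le> M * (1 / (2*M+1))" by (intro mult_left_mono epsb M0)
      also have "\<dots> \<le> 1/2" using M0 by (simp add: field_simps)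
      finally show ?thesis .
    qed
    have TFc[simp]: "T + F ts \<in> carrier_mat d d" by simp
    have detTF: "Determinant.det (T + F ts) \<noteq> 0"
      by (rule det_pert[OF Tc Fc Tic Ti(3)]) (use small in linarith)
    define G where "G = minv (T + F ts)"
    have G: "G \<in> carrier_mat d d" "(T + F ts) * G = 1\<^sub>m d" "G * (T + F ts) = 1\<^sub>m d"
      using minv_props[OF TFc detTF] unfolding G_def by auto
    have Gc[simp]: "G \<in> carrier_mat d d" using G(1) by blast
    have Gd[simp]: "dim_row G = d" "dim_col G = d" using carrier_matD[OF Gc] by auto
    define Pi where "Pi = G * (E (- ts) * Ri)"
    have Pic[simp]: "Pi \<in> carrier_mat d d" unfolding Pi_def by simp
    have PiP: "Pi * P ts = 1\<^sub>m d"
    proof -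
      have "Pi * P ts = G * (E (- ts) * Ri) * (R * (E ts * (T + F ts)))" unfolding Pi_def PF[of ts] ..
      also have "\<dots> = G * (E (- ts) * (Ri * (R * (E ts * (T + F ts)))))" by simp
      also have "Ri * (R * (E ts * (T + F ts))) = E ts * (T + F ts)"
        by (rule cancel_left[where n=d and m=d]) (auto simp: Ri)
      also have "E (- ts) * (E ts * (T + F ts)) = T + F ts"
        by (rule cancel_left[where n=d and m=d]) (auto simp: Einv)
      also have "G * (T + F ts) = 1\<^sub>m d" by (rule G(3))
      finally show ?thesis .
    qed
    have PPi: "P ts * Pi = 1\<^sub>m d"
    proof -
      have "P ts * Pi = R * (E ts * (T + F ts)) * (G * (E (- ts) * Ri))" unfolding Pi_def PF[of ts] ..
      also have "\<dots> = R * (E ts * ((T + F ts) * (G * (E (- ts) * Ri))))" by simp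
      also have "(T + F ts) * (G * (E (- ts) * Ri)) = E (- ts) * Ri"
        by (rule cancel_left[where n=d and m=d]) (auto simp: G)
      also have "E ts * (E (- ts) * Ri) = Ri"
        by (rule cancel_left[where n=d and m=d]) (auto simp: Einv)
      also have "R * Ri = 1\<^sub>m d" by (rule Ri(2))
      finally show ?thesis .
    qed
    have invP: "invertible_mat (P ts)" by (rule invertible_of[OF Pc Pic PPi PiP])
    have detP: "Determinant.det (P ts) \<noteq> 0" by (rule det_ne_of_inv[OF Pc invP])
    have B: "minv (P ts) \<in> carrier_mat d d" "minv (P ts) * P ts = 1\<^sub>m d"
      using minv_props[OF Pc detP] by auto
    have minvP: "minv (P ts) = Pi"
    proof -
      have "minv (P ts) = minv (P ts) * (P ts * Pi)" using PPi B(1) by simp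
      also have "\<dots> = (minv (P ts) * P ts) * Pi" using B(1) by simp
      also have "\<dots> = Pi" using B(2) left_mult_one_mat[OF Pic] by simp
      finally show ?thesis .
    qed
    define F' where "F' = F (ts + \<delta>)"
    have F'c[simp]: "F' \<in> carrier_mat d d" unfolding F'_def by simp
    have skip: "Phi_skip d mu nu phi lam rho ts \<delta> = G * (E \<delta> * (T + F'))"
    proof -
      have "Phi_skip d mu nu phi lam rho ts \<delta> = Pi * P (ts + \<delta>)"
        unfolding Phi_skip_def P_def[symmetric] minvP ..
      also have "P (ts + \<delta>) = R * (E ts * (E \<delta> * (T + F')))"
        unfolding PF[of "ts + \<delta>"] F'_def[symmetric] E_def E_mult[symmetric]
        by (simp flip: E_def)
      also have "Pi * (R * (E ts * (E \<delta> * (T + F')))) = G * (E (- ts) * (Ri * (R * (E ts * (E \<delta> * (T + F'))))))"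
        unfolding Pi_def by simp
      also have "Ri * (R * (E ts * (E \<delta> * (T + F')))) = E ts * (E \<delta> * (T + F'))"
        by (rule cancel_left[where n=d and m=d]) (auto simp: Ri)
      also have "E (- ts) * (E ts * (E \<delta> * (T + F'))) = E \<delta> * (T + F')"
        by (rule cancel_left[where n=d and m=d]) (auto simp: Einv)
      finally show ?thesis .
    qed
    have star: "Phi_star d mu nu phi lam rho \<delta> = Ti * (E \<delta> * T)"
      unfolding Phi_star_def Ti_def[symmetric] T_def[symmetric] E_def[symmetric] by simp
    have S0: "Ti = G + Ti * (F ts * G)"
    proof -
      have "Ti = Ti * ((T + F ts) * G)" using G(2) by simp
      also have "(T + F ts) * G = T * G + F ts * G" by (rule add_mult_distrib_mat[OF Tc Fc Gc])
      also have "Ti * (T * G + F ts * G) = Ti * (T * G) + Ti * (F ts * G)"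
        by (rule mult_add_distrib_mat[OF Tic]) auto
      also have "Ti * (T * G) = G" by (rule cancel_left[where n=d and m=d]) (auto simp: Ti)
      finally show ?thesis .
    qed
    have Gb: "mn G \<le> 2 * mn Ti"
    proof -
      have "G = Ti - Ti * (F ts * G)"
      proof -
        define X where "X = Ti * (F ts * G)"
        have Xc: "X \<in> carrier_mat d d" unfolding X_def by simp
        have S0': "Ti = G + X" using S0 unfolding X_def .
        have "(G + X) - X = G" by (rule add_minus_cancel_mat2[OF Xc Gc])
        then show ?thesis unfolding X_def[symmetric] using S0' by simp
      qed
      then have "mn G \<le> mn Ti + mn (Ti * (F ts * G))"
        using mn_minus[OF Tic, of "Ti * (F ts * G)"] by simp
      also have "mn (Ti * (F ts * G)) \<le> mn Ti * (mn (F ts) * mn G)"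
        using mn_mult[OF Tic mult_carrier_mat[OF Fc Gc]] mn_mult[OF Fc Gc] mn_nonneg[of Ti]
        by (meson mult_left_mono order_trans)
      also have "mn Ti * (mn (F ts) * mn G) = (mn Ti * mn (F ts)) * mn G" by simp
      also have "\<dots> \<le> 1/2 * mn G" by (intro mult_right_mono small mn_nonneg)
      finally show ?thesis by simp
    qed
    have diff: "Phi_star d mu nu phi lam rho \<delta> - Phi_skip d mu nu phi lam rho ts \<delta>
        = Ti * (F ts * (G * (E \<delta> * T))) - G * (E \<delta> * F')"
    proof -
      have s1: "Ti * (E \<delta> * T) = G * (E \<delta> * T) + Ti * (F ts * (G * (E \<delta> * T)))"
      proof -
        have "Ti * (E \<delta> * T) = (G + Ti * (F ts * G)) * (E \<delta> * T)" using S0 by simp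
        also have "\<dots> = G * (E \<delta> * T) + Ti * (F ts * G) * (E \<delta> * T)"
          by (rule add_mult_distrib_mat[where n=d and nr=d and nc=d]) auto
        finally show ?thesis by simp
      qed
      have s2: "G * (E \<delta> * (T + F')) = G * (E \<delta> * T) + G * (E \<delta> * F')"
        by (simp add: mult_add_distrib_mat[OF Ec Tc F'c] mult_add_distrib_mat[OF Gc, of "E \<delta> * T" d])
      show ?thesis unfolding star skip s1 s2
        by (rule add_minus_cancel_mat[where n=d and m=d]) auto
    qed
    have mnY: "mn (Ti * (F ts * (G * (E \<delta> * T)))) \<le> mn Ti * (mn (F ts) * (mn G * (mn (E \<delta>) * mn T)))"
    proof -
      have "mn (Ti * (F ts * (G * (E \<delta> * T)))) \<le> mn Ti * mn (F ts * (G * (E \<delta> * T)))"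
        by (rule mn_mult[where n=d and m=d and p=d]) auto
      also have "mn (F ts * (G * (E \<delta> * T))) \<le> mn (F ts) * mn (G * (E \<delta> * T))"
        by (rule mn_mult[where n=d and m=d and p=d]) auto
      also have "mn (G * (E \<delta> * T)) \<le> mn G * mn (E \<delta> * T)"
        by (rule mn_mult[where n=d and m=d and p=d]) auto
      also have "mn (E \<delta> * T) \<le> mn (E \<delta>) * mn T"
        by (rule mn_mult[where n=d and m=d and p=d]) auto
      finally show ?thesis by (simp add: mn_nonneg mult_left_mono)
    qed
    have mnZ: "mn (G * (E \<delta> * F')) \<le> mn G * (mn (E \<delta>) * mn F')"
    proof -
      have "mn (G * (E \<delta> * F')) \<le> mn G * mn (E \<delta> * F')"
        by (rule mn_mult[where n=d and m=d and p=d]) auto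
      also have "mn (E \<delta> * F') \<le> mn (E \<delta>) * mn F'"
        by (rule mn_mult[where n=d and m=d and p=d]) auto
      finally show ?thesis by (simp add: mn_nonneg mult_left_mono)
    qed
    have mnF1: "mn (F ts) \<le> K1 * eps ts" by (rule mnF[OF tpos])
    have mnF2: "mn F' \<le> K1 * eps ts"
      unfolding F'_def using mnF[OF td] epsmono K1nn by (meson mult_left_mono order_trans)
    have Yb: "mn Ti * (mn (F ts) * (mn G * (mn (E \<delta>) * mn T))) \<le> mn Ti * ((K1 * eps ts) * ((2 * mn Ti) * (mn (E \<delta>) * mn T)))"
    proof (intro mult_left_mono mult_mono mnF1 Gb order_refl)
    qed (use mn_nonneg K1nn eps0 in \<open>auto intro!: mult_nonneg_nonneg\<close>)
    have Zb: "mn G * (mn (E \<delta>) * mn F') \<le> (2 * mn Ti) * (mn (E \<delta>) * (K1 * eps ts))"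
    proof (intro mult_left_mono mult_mono mnF2 Gb order_refl)
    qed (use mn_nonneg K1nn eps0 in \<open>auto intro!: mult_nonneg_nonneg\<close>)
    have "fro_norm (Phi_star d mu nu phi lam rho \<delta> - Phi_skip d mu nu phi lam rho ts \<delta>)
        \<le> mn (Ti * (F ts * (G * (E \<delta> * T))) - G * (E \<delta> * F'))"
      unfolding diff by (rule fro_le_mn)
    also have "\<dots> \<le> mn (Ti * (F ts * (G * (E \<delta> * T)))) + mn (G * (E \<delta> * F'))"
      by (rule mn_minus[where n=d and m=d]) auto
    also have "\<dots> \<le> mn Ti * ((K1 * eps ts) * ((2 * mn Ti) * (mn (E \<delta>) * mn T))) + (2 * mn Ti) * (mn (E \<delta>) * (K1 * eps ts))"
      using mnY Yb mnZ Zb by linarith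
    also have "\<dots> = C1 * eps ts" unfolding C1_def by (simp add: algebra_simps)
    also have "\<dots> \<le> (C1 + 1) * eps ts" using eps0 by (simp add: algebra_simps)
    finally show ?thesis using invP by simp
  qed
  show ?thesis
    using main t00 C10 unfolding P_def eps_def
    by (intro exI[of _ t0] conjI exI[of _ "C1+1"] allI impI) auto
qed







end
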